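(* Consider the two-tubes TFE equations (defined in the context). There exist exactly two propagating terraces consisting of two traveling waves connecting $(-1,-1)$ to $(1,1)$ (traveling wave profiles counted up to translation of the variable $y-vt$). In both, the speeds are $v_1^*=-1/4$ and $v_2^*=1/4$; the intermediate state is $\sigma_1=(1/2,-1/2)$ for one of them and $\sigma_1=(-1/2,1/2)$ for the other. That is, the terraces are $\sigma_0=(-1,-1)\to\sigma_1\to\sigma_2=(1,1)$ with $\sigma_1\in\{(1/2,-1/2),(-1/2,1/2)\}$.
   Context: Two-tubes TFE equations: unknowns $c_1,c_2$, real functions of $(t,y)\in[0,\infty)\times\mathbb{R}$, satisfying $$\partial_t c_1+\partial_y(u_1c_1)-\partial_{yy}c_1=-f,\qquad \partial_t c_2+\partial_y(u_2c_2)-\partial_{yy}c_2=f,$$ with $u_1=(c_2-c_1)/2$, $u_2=-u_1$, and $f=-(\partial_y u_1)\,c_1$ if $\partial_y u_1\le 0$, $f=-(\partial_y u_1)\,c_2$ if $\partial_y u_1\ge0$. A traveling wave with speed $v$ connecting $g_-,g_+\in\mathbb{R}^2$ is a solution of the form $(c_1,c_2)(t,y)=\tilde g(y-vt)$ with $\tilde g:\mathbb{R}\to\mathbb{R}^2$ continuous (and smooth enough to solve the equations classically), $\tilde g(-\infty)=g_-$, $\tilde g(+\infty)=g_+$. A propagating terrace connecting $\alpha$ to $\beta$ ($\alpha,\beta\in\mathbb{R}^2$) is a pair of finite sequences $(\sigma_k)_{0\le k\le N}$, $(g_k)_{1\le k\le N}$ with each $\sigma_k\in\mathbb{R}^2$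 a stationary (constant) solution, $\sigma_0=\alpha$, $\sigma_N=\beta$, each $g_k$ a traveling wave connecting $\sigma_{k-1}$ to $\sigma_k$ with speed $v_k$, and $v_1\le\dots\le v_N$. "Two traveling waves" means $N=2$. *)

theory Defs
  imports "HOL-Analysis.Analysis"
begin

text \<open>Exchange term f of the two-tubes TFE system, as a function of
  the value of the y-derivative of u_1 and of c_1, c_2.\<close>
definition tfe_exchange :: "real \<Rightarrow> real \<Rightarrow> real \<Rightarrow> real" where
  "tfe_exchange du1 a b = (if du1 \<le> 0 then - du1 * a else - du1 * b)"

text \<open>Classical solution on [0,oo) x R.  c1, c2 take arguments (t, y).
  d1t, d1y, d1yy etc. are the classical partial derivatives; the term
  d_y(u_1 c_1) is written out by the product rule (both factors are
  differentiable in y).  u_1 = (c2 - c1)/2, u_2 = - u_1.\<close>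
definition tfe_classical_solution ::
  "(real \<Rightarrow> real \<Rightarrow> real) \<Rightarrow> (real \<Rightarrow> real \<Rightarrow> real) \<Rightarrow> bool" where
  "tfe_classical_solution c1 c2 \<longleftrightarrow>
     (\<exists>d1t d2t d1y d2y d1yy d2yy :: real \<Rightarrow> real \<Rightarrow> real.
       \<forall>t y. t \<ge> 0 \<longrightarrow>
         ((\<lambda>s. c1 s y) has_real_derivative d1t t y) (at t within {0..}) \<and>
         ((\<lambda>s. c2 s y) has_real_derivative d2t t y) (at t within {0..}) \<and>
         ((\<lambda>z. c1 t z) has_real_derivative d1y t y) (at y) \<and>
         ((\<lambda>z. c2 t z) has_real_derivative d2y t y) (at y) \<and>
         ((\<lambda>z. d1y t z) has_real_derivative d1yy t y) (at y) \<and>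
         ((\<lambda>z. d2y t z) has_real_derivative d2yy t y) (at y) \<and>
         (let u1 = (c2 t y - c1 t y) / 2;
              du1 = (d2y t y - d1y t y) / 2;
              u2 = - u1; du2 = - du1;
              f = tfe_exchange du1 (c1 t y) (c2 t y)
          in d1t t y + (du1 * c1 t y + u1 * d1y t y) - d1yy t y = - f \<and>
             d2t t y + (du2 * c2 t y + u2 * d2y t y) - d2yy t y = f))"

definition tfe_stationary :: "real \<times> real \<Rightarrow> bool" where
  "tfe_stationary s \<longleftrightarrow>
     tfe_classical_solution (\<lambda>t y. fst s) (\<lambda>t y. snd s)"

definition tfe_traveling_wave ::
  "(real \<Rightarrow> real \<times> real) \<Rightarrow> real \<Rightarrow> real \<times> real \<Rightarrow> real \<times> real \<Rightarrow> bool" where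
  "tfe_traveling_wave g v gm gp \<longleftrightarrow>
     continuous_on UNIV g \<and>
     tfe_classical_solution (\<lambda>t y. fst (g (y - v * t))) (\<lambda>t y. snd (g (y - v * t))) \<and>
     (g \<longlongrightarrow> gm) at_bot \<and> (g \<longlongrightarrow> gp) at_top"

definition tfe_terrace2 ::
  "real \<times> real \<Rightarrow> real \<times> real \<Rightarrow> real \<times> real \<Rightarrow>
   (real \<Rightarrow> real \<times> real) \<Rightarrow> real \<Rightarrow> (real \<Rightarrow> real \<times> real) \<Rightarrow> real \<Rightarrow> bool" where
  "tfe_terrace2 \<alpha> \<sigma>1 \<beta> g1 v1 g2 v2 \<longleftrightarrow>
     tfe_stationary \<alpha> \<and> tfe_stationary \<sigma>1 \<and> tfe_stationary \<beta> \<and>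
     tfe_traveling_wave g1 v1 \<alpha> \<sigma>1 \<and> tfe_traveling_wave g2 v2 \<sigma>1 \<beta> \<and> v1 \<le> v2"

end

theory Submission
  imports Defs
begin
lemma gronwall_zero:
  fixes h h' :: "real \<Rightarrow> real"
  assumes ab: "a \<le> b"
    and d: "\<And>x. x \<in> {a..b} \<Longrightarrow> (h has_real_derivative h' x) (at x)"
    and bd: "\<And>x. x \<in> {a..b} \<Longrightarrow> \<bar>h' x\<bar> \<le> L * h x"
    and nn: "\<And>x. x \<in> {a..b} \<Longrightarrow> 0 \<le> h x"
    and c: "c \<in> {a..b}" "h c = 0" and x: "x \<in> {a..b}"
  shows "h x = 0"
proof (cases "c \<le> x")
  case True
  let ?g = "\<lambda>y. exp (- L * y) * h y"
  have "?g c \<ge> ?g x"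
  proof (rule DERIV_nonpos_imp_nonincreasing[OF True])
    fix y assume y: "c \<le> y" "y \<le> x"
    then have yab: "y \<in> {a..b}" using c x by auto
    have "(?g has_real_derivative (exp (- L * y) * (- L) * h y + exp (- L * y) * h' y)) (at y)"
      by (auto intro!: derivative_eq_intros d[OF yab])
    moreover have "exp (- L * y) * (- L) * h y + exp (- L * y) * h' y \<le> 0"
    proof -
      have "h' y - L * h y \<le> 0" using bd[OF yab] by linarith
      then have "exp (- L * y) * (h' y - L * h y) \<le> 0" by (simp add: mult_nonneg_nonpos)
      then show ?thesis by (simp add: algebra_simps)
    qed
    ultimately show "\<exists>z. (?g has_real_derivative z) (at y) \<and> z \<le> 0" by blast
  qed
  then have "exp (- L * x) * h x \<le> 0" using c by simp
  then have "h x \<le> 0" by (simp add: mult_le_0_iff)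
  then show ?thesis using nn[OF x] by linarith
next
  case False
  let ?g = "\<lambda>y. exp (L * y) * h y"
  have "?g x \<le> ?g c"
  proof (rule DERIV_nonneg_imp_nondecreasing[of x c ?g])
    show "x \<le> c" using False by simp
    fix y assume y: "x \<le> y" "y \<le> c"
    then have yab: "y \<in> {a..b}" using c x by auto
    have "(?g has_real_derivative (exp (L * y) * L * h y + exp (L * y) * h' y)) (at y)"
      by (auto intro!: derivative_eq_intros d[OF yab])
    moreover have "exp (L * y) * L * h y + exp (L * y) * h' y \<ge> 0"
    proof -
      have "h' y + L * h y \<ge> 0" using bd[OF yab] by linarith
      then have "exp (L * y) * (h' y + L * h y) \<ge> 0" by simp
      then show ?thesis by (simp add: algebra_simps)
    qed
    ultimately show "\<exists>z. (?g has_real_derivative z) (at y) \<and> z \<ge> 0" by blast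
  qed
  then have "exp (L * x) * h x \<le> 0" using c by simp
  then have "h x \<le> 0" by (simp add: mult_le_0_iff)
  then show ?thesis using nn[OF x] by linarith
qed

lemma bounded_on_Icc:
  fixes f :: "real \<Rightarrow> real"
  assumes "continuous_on {a..b} f"
  shows "\<exists>M. \<forall>x\<in>{a..b}. \<bar>f x\<bar> \<le> M"
proof -
  have "compact (f ` {a..b})" using assms by (intro compact_continuous_image) auto
  then have "bounded (f ` {a..b})" by (rule compact_imp_bounded)
  then obtain M where "\<forall>y\<in>f ` {a..b}. norm y \<le> M" by (auto simp: bounded_iff)
  then show ?thesis by auto
qed

lemma no_growth_top:
  fixes f f' :: "real \<Rightarrow> real"
  assumes lim: "(f \<longlongrightarrow> L) at_top"
    and d: "\<And>x. x \<ge> R \<Longrightarrow> (f has_real_derivative f' x) (at x)"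
    and pos: "\<And>x. x \<ge> R \<Longrightarrow> f' x \<ge> c" and c: "c > 0"
  shows False
proof -
  have ge: "f x \<ge> f R + c * (x - R)" if "x \<ge> R" for x
  proof -
    have "(\<lambda>y. f y - c * y) R \<le> (\<lambda>y. f y - c * y) x"
    proof (rule DERIV_nonneg_imp_nondecreasing[OF that])
      fix y assume "R \<le> y" "y \<le> x"
      then show "\<exists>z. ((\<lambda>y. f y - c * y) has_real_derivative z) (at y) \<and> z \<ge> 0"
        using d pos by (intro exI[of _ "f' y - c"]) (auto intro!: derivative_eq_intros)
    qed
    then show ?thesis by (simp add: algebra_simps)
  qed
  have "eventually (\<lambda>x. f x < L + 1) at_top"
    using lim by (rule order_tendstoD) simp
  then obtain N where N: "\<And>x. x \<ge> N \<Longrightarrow> f x < L + 1" by (auto simp: eventually_at_top_linorder)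
  define x where "x = max (max N R) (R + (L + 1 - f R) / c + 1)"
  have "x \<ge> R" "x \<ge> N" unfolding x_def by auto
  have "c * (x - R) \<ge> c * ((L + 1 - f R) / c + 1)"
    using c unfolding x_def by (intro mult_left_mono) auto
  also have "c * ((L + 1 - f R) / c + 1) = L + 1 - f R + c" using c by (simp add: field_simps)
  finally have "f x \<ge> L + 1 + c" using ge[OF \<open>x \<ge> R\<close>] by linarith
  with N[OF \<open>x \<ge> N\<close>] c show False by linarith
qed

lemma no_decay_top:
  fixes f f' :: "real \<Rightarrow> real"
  assumes lim: "(f \<longlongrightarrow> L) at_top"
    and d: "\<And>x. x \<ge> R \<Longrightarrow> (f has_real_derivative f' x) (at x)"
    and neg: "\<And>x. x \<ge> R \<Longrightarrow> f' x \<le> - c" and c: "c > 0"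
  shows False
proof -
  have "((\<lambda>x. - f x) \<longlongrightarrow> - L) at_top" using lim by (intro tendsto_intros)
  moreover have "((\<lambda>x. - f x) has_real_derivative - f' x) (at x)" if "x \<ge> R" for x
    using d[OF that] by (auto intro!: derivative_eq_intros)
  ultimately show False using no_growth_top[of "\<lambda>x. - f x" "- L" R "\<lambda>x. - f' x" c] neg c by force
qed

lemma deriv_limit_zero_top:
  fixes f f' :: "real \<Rightarrow> real"
  assumes lim: "(f \<longlongrightarrow> L) at_top"
    and d: "\<And>x. (f has_real_derivative f' x) (at x)"
    and lim': "(f' \<longlongrightarrow> M) at_top"
  shows "M = 0"
proof (rule ccontr)
  assume "M \<noteq> 0"
  then consider "M > 0" | "M < 0" by linarith
  then show False
  proof cases
    case 1
    have "eventually (\<lambda>x. f' x > M / 2) at_top" using lim' 1 by (intro order_tendstoD) auto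
    then obtain R where "\<And>x. x \<ge> R \<Longrightarrow> f' x > M / 2" by (auto simp: eventually_at_top_linorder)
    then show False using no_growth_top[OF lim, of R f' "M/2"] d 1 by force
  next
    case 2
    have "eventually (\<lambda>x. f' x < M / 2) at_top" using lim' 2 by (intro order_tendstoD) auto
    then obtain R where "\<And>x. x \<ge> R \<Longrightarrow> f' x < M / 2" by (auto simp: eventually_at_top_linorder)
    then show False using no_decay_top[OF lim, of R f' "- M/2"] d 2 by force
  qed
qed

lemma deriv_limit_zero_bot:
  fixes f f' :: "real \<Rightarrow> real"
  assumes lim: "(f \<longlongrightarrow> L) at_bot"
    and d: "\<And>x. (f has_real_derivative f' x) (at x)"
    and lim': "(f' \<longlongrightarrow> M) at_bot"
  shows "M = 0"
proof -
  have "((\<lambda>x. f (- x)) \<longlongrightarrow> L) at_top"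
    using lim by (simp add: at_bot_mirror filterlim_filtermap o_def)
  moreover have "((\<lambda>x. f (- x)) has_real_derivative - f' (- x)) (at x)" for x
    using d[of "- x"] by (simp add: DERIV_mirror)
  moreover have "((\<lambda>x. - f' (- x)) \<longlongrightarrow> - M) at_top"
    using lim' by (intro tendsto_intros) (simp add: at_bot_mirror filterlim_filtermap o_def)
  ultimately have "- M = 0" by (rule deriv_limit_zero_top)
  then show ?thesis by simp
qed

definition wave_ode :: "real \<Rightarrow> (real \<Rightarrow> real) \<Rightarrow> (real \<Rightarrow> real) \<Rightarrow> (real \<Rightarrow> real) \<Rightarrow> (real \<Rightarrow> real) \<Rightarrow> bool" where
  "wave_ode v p q P Q \<longleftrightarrow> (\<forall>x. (p has_real_derivative P x) (at x) \<and> (q has_real_derivative Q x) (at x) \<and>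
     (P has_real_derivative (- v * P x + (Q x - P x) / 2 * p x + (q x - p x) / 2 * P x
         + tfe_exchange ((Q x - P x) / 2) (p x) (q x))) (at x) \<and>
     (Q has_real_derivative (- v * Q x - (Q x - P x) / 2 * q x - (q x - p x) / 2 * Q x
         - tfe_exchange ((Q x - P x) / 2) (p x) (q x))) (at x))"

lemma tfe_exchange_swap: "tfe_exchange (- d) b a = - tfe_exchange d a b"
  by (auto simp: tfe_exchange_def)

lemma tfe_exchange_neg: "tfe_exchange d (- a) (- b) = - tfe_exchange d a b"
  by (auto simp: tfe_exchange_def)

lemma wave_ode_swap:
  assumes "wave_ode v p q P Q" shows "wave_ode v q p Q P"
  unfolding wave_ode_def
proof (intro allI conjI)
  fix x :: real
  have h: "(p has_real_derivative P x) (at x)" "(q has_real_derivative Q x) (at x)"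
     "(P has_real_derivative (- v * P x + (Q x - P x) / 2 * p x + (q x - p x) / 2 * P x
         + tfe_exchange ((Q x - P x) / 2) (p x) (q x))) (at x)"
     "(Q has_real_derivative (- v * Q x - (Q x - P x) / 2 * q x - (q x - p x) / 2 * Q x
         - tfe_exchange ((Q x - P x) / 2) (p x) (q x))) (at x)"
    using assms unfolding wave_ode_def by auto
  have e1: "tfe_exchange ((P x - Q x) / 2) (q x) (p x) = - tfe_exchange ((Q x - P x) / 2) (p x) (q x)"
    using tfe_exchange_swap[of "(Q x - P x) / 2" "q x" "p x"] by (simp add: minus_divide_left)
  show "(q has_real_derivative Q x) (at x)" "(p has_real_derivative P x) (at x)" using h by auto
  show "(Q has_real_derivative (- v * Q x + (P x - Q x) / 2 * q x + (p x - q x) / 2 * Q x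
         + tfe_exchange ((P x - Q x) / 2) (q x) (p x))) (at x)"
    using h(4) unfolding e1 by (simp add: algebra_simps diff_divide_distrib)
  show "(P has_real_derivative (- v * P x - (P x - Q x) / 2 * p x - (p x - q x) / 2 * P x
         - tfe_exchange ((P x - Q x) / 2) (q x) (p x))) (at x)"
    using h(3) unfolding e1 by (simp add: algebra_simps diff_divide_distrib)
qed

lemma wave_ode_reflect:
  assumes "wave_ode v p q P Q"
  shows "wave_ode (- v) (\<lambda>x. - p (- x)) (\<lambda>x. - q (- x)) (\<lambda>x. P (- x)) (\<lambda>x. Q (- x))"
  unfolding wave_ode_def
proof (intro allI conjI)
  fix x :: real
  let ?y = "- x"
  have h: "(p has_real_derivative P ?y) (at ?y)" "(q has_real_derivative Q ?y) (at ?y)"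
     "(P has_real_derivative (- v * P ?y + (Q ?y - P ?y) / 2 * p ?y + (q ?y - p ?y) / 2 * P ?y
         + tfe_exchange ((Q ?y - P ?y) / 2) (p ?y) (q ?y))) (at ?y)"
     "(Q has_real_derivative (- v * Q ?y - (Q ?y - P ?y) / 2 * q ?y - (q ?y - p ?y) / 2 * Q ?y
         - tfe_exchange ((Q ?y - P ?y) / 2) (p ?y) (q ?y))) (at ?y)"
    using assms unfolding wave_ode_def by auto
  have e: "tfe_exchange ((Q ?y - P ?y) / 2) (- p ?y) (- q ?y) = - tfe_exchange ((Q ?y - P ?y) / 2) (p ?y) (q ?y)"
    by (rule tfe_exchange_neg)
  have m1: "((\<lambda>x. p (- x)) has_real_derivative - P ?y) (at x)" using h(1) by (simp add: DERIV_mirror)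
  show "((\<lambda>x. - p (- x)) has_real_derivative P (- x)) (at x)"
    using DERIV_minus[OF m1] by simp
  have m2: "((\<lambda>x. q (- x)) has_real_derivative - Q ?y) (at x)" using h(2) by (simp add: DERIV_mirror)
  show "((\<lambda>x. - q (- x)) has_real_derivative Q (- x)) (at x)"
    using DERIV_minus[OF m2] by simp
  have m3: "((\<lambda>x. P (- x)) has_real_derivative - (- v * P ?y + (Q ?y - P ?y) / 2 * p ?y + (q ?y - p ?y) / 2 * P ?y
         + tfe_exchange ((Q ?y - P ?y) / 2) (p ?y) (q ?y))) (at x)"
    using h(3) by (simp add: DERIV_mirror)
  show "((\<lambda>x. P (- x)) has_real_derivative (- (- v) * P (- x) + (Q (- x) - P (- x)) / 2 * - p (- x) +
          (- q (- x) - - p (- x)) / 2 * P (- x) + tfe_exchange ((Q (- x) - P (- x)) / 2) (- p (- x)) (- q (- x)))) (at x)"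
    using m3 unfolding e by (simp add: algebra_simps diff_divide_distrib)
  have m4: "((\<lambda>x. Q (- x)) has_real_derivative - (- v * Q ?y - (Q ?y - P ?y) / 2 * q ?y - (q ?y - p ?y) / 2 * Q ?y
         - tfe_exchange ((Q ?y - P ?y) / 2) (p ?y) (q ?y))) (at x)"
    using h(4) by (simp add: DERIV_mirror)
  show "((\<lambda>x. Q (- x)) has_real_derivative (- (- v) * Q (- x) - (Q (- x) - P (- x)) / 2 * - q (- x) -
          (- q (- x) - - p (- x)) / 2 * Q (- x) - tfe_exchange ((Q (- x) - P (- x)) / 2) (- p (- x)) (- q (- x)))) (at x)"
    using m4 unfolding e by (simp add: algebra_simps diff_divide_distrib)
qed

lemma at0_within_nonbot: "at (0::real) within {0..} \<noteq> bot"
proof -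
  have "{0::real..} - {0} = {0<..}" by auto
  then show ?thesis by (simp add: at_within_eq_bot_iff)
qed

lemma tw_to_ode:
  assumes "tfe_traveling_wave g v gm gp"
  shows "\<exists>P Q. wave_ode v (\<lambda>x. fst (g x)) (\<lambda>x. snd (g x)) P Q"
proof -
  from assms obtain d1t d2t d1y d2y d1yy d2yy :: "real \<Rightarrow> real \<Rightarrow> real" where
    H: "\<And>t y. t \<ge> 0 \<Longrightarrow>
         ((\<lambda>s. fst (g (y - v * s))) has_real_derivative d1t t y) (at t within {0..}) \<and>
         ((\<lambda>s. snd (g (y - v * s))) has_real_derivative d2t t y) (at t within {0..}) \<and>
         ((\<lambda>z. fst (g (z - v * t))) has_real_derivative d1y t y) (at y) \<and>
         ((\<lambda>z. snd (g (z - v * t))) has_real_derivative d2y t y) (at y) \<and>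
         ((\<lambda>z. d1y t z) has_real_derivative d1yy t y) (at y) \<and>
         ((\<lambda>z. d2y t z) has_real_derivative d2yy t y) (at y) \<and>
         (let u1 = (snd (g (y - v * t)) - fst (g (y - v * t))) / 2;
              du1 = (d2y t y - d1y t y) / 2;
              u2 = - u1; du2 = - du1;
              f = tfe_exchange du1 (fst (g (y - v * t))) (snd (g (y - v * t)))
          in d1t t y + (du1 * fst (g (y - v * t)) + u1 * d1y t y) - d1yy t y = - f \<and>
             d2t t y + (du2 * snd (g (y - v * t)) + u2 * d2y t y) - d2yy t y = f)"
    unfolding tfe_traveling_wave_def tfe_classical_solution_def by blast
  define p where "p = (\<lambda>x. fst (g x))"
  define q where "q = (\<lambda>x. snd (g x))"
  define P where "P = (\<lambda>x. d1y 0 x)"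
  define Q where "Q = (\<lambda>x. d2y 0 x)"
  have "wave_ode v p q P Q"
    unfolding wave_ode_def
  proof (intro allI)
    fix x
    have Hx: "((\<lambda>s. p (x - v * s)) has_real_derivative d1t 0 x) (at 0 within {0..})"
      "((\<lambda>s. q (x - v * s)) has_real_derivative d2t 0 x) (at 0 within {0..})"
      "(p has_real_derivative P x) (at x)" "(q has_real_derivative Q x) (at x)"
      "(P has_real_derivative d1yy 0 x) (at x)" "(Q has_real_derivative d2yy 0 x) (at x)"
      and eq: "d1t 0 x + ((Q x - P x) / 2 * p x + (q x - p x) / 2 * P x) - d1yy 0 x
                  = - tfe_exchange ((Q x - P x) / 2) (p x) (q x)"
              "d2t 0 x + (- ((Q x - P x) / 2) * q x + - ((q x - p x) / 2) * Q x) - d2yy 0 x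
                  = tfe_exchange ((Q x - P x) / 2) (p x) (q x)"
      using H[of 0 x] unfolding p_def q_def P_def Q_def Let_def by (auto simp: fun_eq_iff)
    have c1: "((\<lambda>s. p (x - v * s)) has_real_derivative P x * (- v)) (at 0 within {0..})"
      using Hx(3) by (intro DERIV_chain2[where f = p]) (auto intro!: derivative_eq_intros)
    have c2: "((\<lambda>s. q (x - v * s)) has_real_derivative Q x * (- v)) (at 0 within {0..})"
      using Hx(4) by (intro DERIV_chain2[where f = q]) (auto intro!: derivative_eq_intros)
    have t1: "d1t 0 x = - v * P x"
      using has_field_derivative_unique[OF Hx(1) c1 at0_within_nonbot] by simp
    have t2: "d2t 0 x = - v * Q x"
      using has_field_derivative_unique[OF Hx(2) c2 at0_within_nonbot] by simp
    have e1: "d1yy 0 x = - v * P x + (Q x - P x) / 2 * p x + (q x - p x) / 2 * P x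
         + tfe_exchange ((Q x - P x) / 2) (p x) (q x)" using eq(1) t1 by linarith
    have e2: "d2yy 0 x = - v * Q x - (Q x - P x) / 2 * q x - (q x - p x) / 2 * Q x
         - tfe_exchange ((Q x - P x) / 2) (p x) (q x)" using eq(2) t2 by linarith
    show "(p has_real_derivative P x) (at x) \<and> (q has_real_derivative Q x) (at x) \<and>
     (P has_real_derivative (- v * P x + (Q x - P x) / 2 * p x + (q x - p x) / 2 * P x
         + tfe_exchange ((Q x - P x) / 2) (p x) (q x))) (at x) \<and>
     (Q has_real_derivative (- v * Q x - (Q x - P x) / 2 * q x - (q x - p x) / 2 * Q x
         - tfe_exchange ((Q x - P x) / 2) (p x) (q x))) (at x)"
      using Hx(3-6) e1 e2 by simp
  qed
  then show ?thesis unfolding p_def q_def by blast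
qed

lemma ode_to_tw:
  assumes ode: "wave_ode v p q P Q"
    and l1: "((\<lambda>x. (p x, q x)) \<longlongrightarrow> gm) at_bot" and l2: "((\<lambda>x. (p x, q x)) \<longlongrightarrow> gp) at_top"
  shows "tfe_traveling_wave (\<lambda>x. (p x, q x)) v gm gp"
proof -
  define E1 where "E1 = (\<lambda>x. - v * P x + (Q x - P x) / 2 * p x + (q x - p x) / 2 * P x
         + tfe_exchange ((Q x - P x) / 2) (p x) (q x))"
  define E2 where "E2 = (\<lambda>x. - v * Q x - (Q x - P x) / 2 * q x - (q x - p x) / 2 * Q x
         - tfe_exchange ((Q x - P x) / 2) (p x) (q x))"
  have D: "\<And>x. (p has_real_derivative P x) (at x)" "\<And>x. (q has_real_derivative Q x) (at x)"
    "\<And>x. (P has_real_derivative E1 x) (at x)" "\<And>x. (Q has_real_derivative E2 x) (at x)"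
    using ode unfolding wave_ode_def E1_def E2_def by auto
  have cont: "continuous_on UNIV (\<lambda>x. (p x, q x))"
  proof -
    have "continuous_on UNIV p" "continuous_on UNIV q"
      using D(1,2) by (auto intro!: DERIV_continuous continuous_at_imp_continuous_on)
    then show ?thesis by (intro continuous_on_Pair)
  qed
  have cl: "tfe_classical_solution (\<lambda>t y. fst ((\<lambda>x. (p x, q x)) (y - v * t))) (\<lambda>t y. snd ((\<lambda>x. (p x, q x)) (y - v * t)))"
    unfolding tfe_classical_solution_def
  proof (intro exI allI impI)
    fix t y :: real
    assume "t \<ge> 0"
    let ?x = "y - v * t"
    have a1: "((\<lambda>s. p (y - v * s)) has_real_derivative P ?x * (- v)) (at t within {0..})"
      using D(1) by (intro DERIV_chain2[where f = p]) (auto intro!: derivative_eq_intros)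
    have a2: "((\<lambda>s. q (y - v * s)) has_real_derivative Q ?x * (- v)) (at t within {0..})"
      using D(2) by (intro DERIV_chain2[where f = q]) (auto intro!: derivative_eq_intros)
    have b1: "((\<lambda>z. p (z - v * t)) has_real_derivative P ?x * 1) (at y)"
      using D(1) by (intro DERIV_chain2[where f = p]) (auto intro!: derivative_eq_intros)
    have b2: "((\<lambda>z. q (z - v * t)) has_real_derivative Q ?x * 1) (at y)"
      using D(2) by (intro DERIV_chain2[where f = q]) (auto intro!: derivative_eq_intros)
    have b3: "((\<lambda>z. P (z - v * t)) has_real_derivative E1 ?x * 1) (at y)"
      using D(3) by (intro DERIV_chain2[where f = P]) (auto intro!: derivative_eq_intros)
    have b4: "((\<lambda>z. Q (z - v * t)) has_real_derivative E2 ?x * 1) (at y)"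
      using D(4) by (intro DERIV_chain2[where f = Q]) (auto intro!: derivative_eq_intros)
    show "((\<lambda>s. fst ((\<lambda>x. (p x, q x)) (y - v * s))) has_real_derivative (\<lambda>t y. - v * P (y - v * t)) t y) (at t within {0..}) \<and>
         ((\<lambda>s. snd ((\<lambda>x. (p x, q x)) (y - v * s))) has_real_derivative (\<lambda>t y. - v * Q (y - v * t)) t y) (at t within {0..}) \<and>
         ((\<lambda>z. fst ((\<lambda>x. (p x, q x)) (z - v * t))) has_real_derivative (\<lambda>t y. P (y - v * t)) t y) (at y) \<and>
         ((\<lambda>z. snd ((\<lambda>x. (p x, q x)) (z - v * t))) has_real_derivative (\<lambda>t y. Q (y - v * t)) t y) (at y) \<and>
         ((\<lambda>z. (\<lambda>t y. P (y - v * t)) t z) has_real_derivative (\<lambda>t y. E1 (y - v * t)) t y) (at y) \<and>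
         ((\<lambda>z. (\<lambda>t y. Q (y - v * t)) t z) has_real_derivative (\<lambda>t y. E2 (y - v * t)) t y) (at y) \<and>
         (let u1 = (snd ((\<lambda>x. (p x, q x)) (y - v * t)) - fst ((\<lambda>x. (p x, q x)) (y - v * t))) / 2;
              du1 = ((\<lambda>t y. Q (y - v * t)) t y - (\<lambda>t y. P (y - v * t)) t y) / 2;
              u2 = - u1; du2 = - du1;
              f = tfe_exchange du1 (fst ((\<lambda>x. (p x, q x)) (y - v * t))) (snd ((\<lambda>x. (p x, q x)) (y - v * t)))
          in (\<lambda>t y. - v * P (y - v * t)) t y + (du1 * fst ((\<lambda>x. (p x, q x)) (y - v * t)) + u1 * (\<lambda>t y. P (y - v * t)) t y) - (\<lambda>t y. E1 (y - v * t)) t y = - f \<and>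
             (\<lambda>t y. - v * Q (y - v * t)) t y + (du2 * snd ((\<lambda>x. (p x, q x)) (y - v * t)) + u2 * (\<lambda>t y. Q (y - v * t)) t y) - (\<lambda>t y. E2 (y - v * t)) t y = f)"
      using a1 a2 b1 b2 b3 b4 unfolding Let_def E1_def E2_def by (simp add: algebra_simps)
  qed
  show ?thesis unfolding tfe_traveling_wave_def using cont cl l1 l2 by blast
qed

lemma wave_ode_D:
  assumes "wave_ode v p q P Q"
  shows "(p has_real_derivative P x) (at x)" "(q has_real_derivative Q x) (at x)"
    "(P has_real_derivative (((q x - p x) / 2 - v) * P x - (q x - p x) * max ((Q x - P x) / 2) 0)) (at x)"
    "(Q has_real_derivative (- ((q x - p x) / 2 + v) * Q x - (q x - p x) * min ((Q x - P x) / 2) 0)) (at x)"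
proof -
  have h: "(p has_real_derivative P x) (at x)" "(q has_real_derivative Q x) (at x)"
     "(P has_real_derivative (- v * P x + (Q x - P x) / 2 * p x + (q x - p x) / 2 * P x
         + tfe_exchange ((Q x - P x) / 2) (p x) (q x))) (at x)"
     "(Q has_real_derivative (- v * Q x - (Q x - P x) / 2 * q x - (q x - p x) / 2 * Q x
         - tfe_exchange ((Q x - P x) / 2) (p x) (q x))) (at x)"
    using assms unfolding wave_ode_def by auto
  show "(p has_real_derivative P x) (at x)" "(q has_real_derivative Q x) (at x)" using h by auto
  have e1: "- v * P x + (Q x - P x) / 2 * p x + (q x - p x) / 2 * P x
         + tfe_exchange ((Q x - P x) / 2) (p x) (q x) = ((q x - p x) / 2 - v) * P x - (q x - p x) * max ((Q x - P x) / 2) 0"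
    by (auto simp: tfe_exchange_def max_def algebra_simps diff_divide_distrib)
  have e2: "- v * Q x - (Q x - P x) / 2 * q x - (q x - p x) / 2 * Q x
         - tfe_exchange ((Q x - P x) / 2) (p x) (q x) = - ((q x - p x) / 2 + v) * Q x - (q x - p x) * min ((Q x - P x) / 2) 0"
    by (auto simp: tfe_exchange_def min_def algebra_simps diff_divide_distrib)
  show "(P has_real_derivative (((q x - p x) / 2 - v) * P x - (q x - p x) * max ((Q x - P x) / 2) 0)) (at x)"
    using h(3) unfolding e1 .
  show "(Q has_real_derivative (- ((q x - p x) / 2 + v) * Q x - (q x - p x) * min ((Q x - P x) / 2) 0)) (at x)"
    using h(4) unfolding e2 .
qed

lemma homog_zero:
  fixes X k :: "real \<Rightarrow> real"
  assumes ab: "a \<le> b"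
    and d: "\<And>x. x \<in> {a..b} \<Longrightarrow> (X has_real_derivative k x * X x) (at x)"
    and k: "continuous_on {a..b} k"
    and c: "c \<in> {a..b}" "X c = 0" and x: "x \<in> {a..b}"
  shows "X x = 0"
proof -
  obtain M where M: "\<And>x. x \<in> {a..b} \<Longrightarrow> \<bar>k x\<bar> \<le> M" using bounded_on_Icc[OF k] by blast
  have "(\<lambda>x. X x * X x) x = 0"
  proof (rule gronwall_zero[OF ab, where h = "\<lambda>x. X x * X x" and h' = "\<lambda>x. 2 * k x * (X x * X x)" and L = "2 * M"])
    fix y assume y: "y \<in> {a..b}"
    show "((\<lambda>x. X x * X x) has_real_derivative 2 * k y * (X y * X y)) (at y)"
      using d[OF y] by (auto intro!: derivative_eq_intros simp: algebra_simps)
    have "\<bar>2 * k y * (X y * X y)\<bar> = 2 * \<bar>k y\<bar> * (X y * X y)" by (simp add: abs_mult)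
    also have "\<dots> \<le> 2 * M * (X y * X y)" using M[OF y] by (intro mult_right_mono) auto
    finally show "\<bar>2 * k y * (X y * X y)\<bar> \<le> 2 * M * (X y * X y)" .
    show "0 \<le> X y * X y" by simp
  qed (use c x in auto)
  then show ?thesis by simp
qed

lemma first_exit:
  fixes m :: "real \<Rightarrow> real"
  assumes cont: "continuous_on UNIV m" and c: "m c > 0" and x: "c \<le> x" "m x \<le> 0"
  shows "\<exists>z. c < z \<and> z \<le> x \<and> m z = 0 \<and> (\<forall>s. c \<le> s \<and> s < z \<longrightarrow> m s > 0)"
proof -
  define S where "S = {s. m s \<le> 0} \<inter> {c..x}"
  have cl: "closed S" unfolding S_def
    by (intro closed_Int closed_Collect_le cont continuous_on_const) auto
  have ne: "S \<noteq> {}" using x unfolding S_def by auto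
  have bb: "bdd_below S" unfolding S_def by (auto intro!: bdd_belowI[of _ c])
  define z where "z = Inf S"
  have zS: "z \<in> S" unfolding z_def by (rule closed_contains_Inf[OF ne bb cl])
  have below: "\<And>s. s \<in> S \<Longrightarrow> z \<le> s" unfolding z_def using bb by (auto intro: cInf_lower)
  have zc: "c \<le> z" "z \<le> x" "m z \<le> 0" using zS unfolding S_def by auto
  have "c \<noteq> z" using zc c by auto
  then have czl: "c < z" using zc by auto
  have cont': "continuous_on {c..z} m" using cont by (rule continuous_on_subset) auto
  obtain s where s: "c \<le> s" "s \<le> z" "m s = 0"
    using IVT2'[of m z 0 c, OF zc(3) _ _ cont'] c czl by auto
  have "s \<in> S" using s zc unfolding S_def by auto
  then have "s = z" using below[of s] s by auto
  moreover have "m s > 0" if "c \<le> s" "s < z" for s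
  proof (rule ccontr)
    assume "\<not> m s > 0"
    then have "s \<in> S" using that zc unfolding S_def by auto
    then show False using below[of s] that by auto
  qed
  ultimately show ?thesis using czl zc s by auto
qed

lemma bound_auxP:
  fixes d P Q v M :: real
  assumes "\<bar>d\<bar> \<le> M"
  shows "\<bar>(d / 2 - v) * P - d * max ((Q - P) / 2) 0\<bar> \<le> (M + \<bar>v\<bar>) * (\<bar>P\<bar> + \<bar>Q\<bar>)"
proof -
  have m: "\<bar>max ((Q - P) / 2) 0\<bar> \<le> (\<bar>P\<bar> + \<bar>Q\<bar>) / 2"
  proof -
    have "\<bar>max ((Q - P) / 2) 0\<bar> \<le> \<bar>Q - P\<bar> / 2" by (cases "(Q - P) / 2 \<le> 0") (simp_all add: max_def)
    also have "\<bar>Q - P\<bar> \<le> \<bar>P\<bar> + \<bar>Q\<bar>" using abs_triangle_ineq4[of Q P] by simp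
    then have "\<bar>Q - P\<bar> / 2 \<le> (\<bar>P\<bar> + \<bar>Q\<bar>) / 2" by simp
    finally show ?thesis .
  qed
  have 1: "\<bar>(d / 2 - v) * P\<bar> \<le> (M / 2 + \<bar>v\<bar>) * \<bar>P\<bar>"
    unfolding abs_mult by (intro mult_right_mono) (use assms in arith)+
  have 2: "\<bar>d * max ((Q - P) / 2) 0\<bar> \<le> M * ((\<bar>P\<bar> + \<bar>Q\<bar>) / 2)"
    unfolding abs_mult by (intro mult_mono m assms) (use abs_ge_zero[of d] assms in auto)
  have "\<bar>(d / 2 - v) * P - d * max ((Q - P) / 2) 0\<bar> \<le> \<bar>(d / 2 - v) * P\<bar> + \<bar>d * max ((Q - P) / 2) 0\<bar>"
    by (rule abs_triangle_ineq4)
  also have "\<dots> \<le> (M / 2 + \<bar>v\<bar>) * \<bar>P\<bar> + M * ((\<bar>P\<bar> + \<bar>Q\<bar>) / 2)" using 1 2 by linarith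
  also have "\<dots> \<le> (M + \<bar>v\<bar>) * (\<bar>P\<bar> + \<bar>Q\<bar>)"
  proof -
    have "0 \<le> M" using assms by linarith
    have "(M + \<bar>v\<bar>) * (\<bar>P\<bar> + \<bar>Q\<bar>) - ((M / 2 + \<bar>v\<bar>) * \<bar>P\<bar> + M * ((\<bar>P\<bar> + \<bar>Q\<bar>) / 2)) = M * \<bar>Q\<bar> / 2 + \<bar>v\<bar> * \<bar>Q\<bar>"
      by (simp add: field_simps)
    moreover have "0 \<le> M * \<bar>Q\<bar> / 2 + \<bar>v\<bar> * \<bar>Q\<bar>" using \<open>0 \<le> M\<close> by simp
    ultimately show ?thesis by linarith
  qed
  finally show ?thesis .
qed

lemma bound_auxQ:
  fixes d P Q v M :: real
  assumes "\<bar>d\<bar> \<le> M"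
  shows "\<bar>- (d / 2 + v) * Q - d * min ((Q - P) / 2) 0\<bar> \<le> (M + \<bar>v\<bar>) * (\<bar>P\<bar> + \<bar>Q\<bar>)"
proof -
  have m: "\<bar>min ((Q - P) / 2) 0\<bar> \<le> (\<bar>P\<bar> + \<bar>Q\<bar>) / 2"
  proof -
    have "\<bar>min ((Q - P) / 2) 0\<bar> \<le> \<bar>Q - P\<bar> / 2" by (cases "(Q - P) / 2 \<le> 0") (simp_all add: min_def)
    also have "\<bar>Q - P\<bar> \<le> \<bar>P\<bar> + \<bar>Q\<bar>" using abs_triangle_ineq4[of Q P] by simp
    then have "\<bar>Q - P\<bar> / 2 \<le> (\<bar>P\<bar> + \<bar>Q\<bar>) / 2" by simp
    finally show ?thesis .
  qed
  have 1: "\<bar>- (d / 2 + v) * Q\<bar> \<le> (M / 2 + \<bar>v\<bar>) * \<bar>Q\<bar>"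
    unfolding abs_mult by (intro mult_right_mono) (use assms in arith)+
  have 2: "\<bar>d * min ((Q - P) / 2) 0\<bar> \<le> M * ((\<bar>P\<bar> + \<bar>Q\<bar>) / 2)"
    unfolding abs_mult by (intro mult_mono m assms) (use abs_ge_zero[of d] assms in auto)
  have "\<bar>- (d / 2 + v) * Q - d * min ((Q - P) / 2) 0\<bar> \<le> \<bar>- (d / 2 + v) * Q\<bar> + \<bar>d * min ((Q - P) / 2) 0\<bar>"
    by (rule abs_triangle_ineq4)
  also have "\<dots> \<le> (M / 2 + \<bar>v\<bar>) * \<bar>Q\<bar> + M * ((\<bar>P\<bar> + \<bar>Q\<bar>) / 2)" using 1 2 by linarith
  also have "\<dots> \<le> (M + \<bar>v\<bar>) * (\<bar>P\<bar> + \<bar>Q\<bar>)"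
  proof -
    have "0 \<le> M" using assms by linarith
    have "(M + \<bar>v\<bar>) * (\<bar>P\<bar> + \<bar>Q\<bar>) - ((M / 2 + \<bar>v\<bar>) * \<bar>Q\<bar> + M * ((\<bar>P\<bar> + \<bar>Q\<bar>) / 2)) = M * \<bar>P\<bar> / 2 + \<bar>v\<bar> * \<bar>P\<bar>"
      by (simp add: field_simps)
    moreover have "0 \<le> M * \<bar>P\<bar> / 2 + \<bar>v\<bar> * \<bar>P\<bar>" using \<open>0 \<le> M\<close> by simp
    ultimately show ?thesis by linarith
  qed
  finally show ?thesis .
qed

lemma bound_sq:
  fixes P Q x y K :: real
  assumes "\<bar>x\<bar> \<le> K * (\<bar>P\<bar> + \<bar>Q\<bar>)" "\<bar>y\<bar> \<le> K * (\<bar>P\<bar> + \<bar>Q\<bar>)" and K: "K \<ge> 0"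
  shows "\<bar>2 * P * x + 2 * Q * y\<bar> \<le> 4 * K * (P * P + Q * Q)"
proof -
  have "\<bar>2 * P * x + 2 * Q * y\<bar> \<le> 2 * \<bar>P\<bar> * \<bar>x\<bar> + 2 * \<bar>Q\<bar> * \<bar>y\<bar>"
    by (metis (mono_tags, opaque_lifting) abs_mult abs_numeral abs_triangle_ineq)
  also have "\<dots> \<le> 2 * \<bar>P\<bar> * (K * (\<bar>P\<bar> + \<bar>Q\<bar>)) + 2 * \<bar>Q\<bar> * (K * (\<bar>P\<bar> + \<bar>Q\<bar>))"
    using assms by (intro add_mono mult_left_mono) auto
  also have "\<dots> = 2 * K * ((\<bar>P\<bar> + \<bar>Q\<bar>) * (\<bar>P\<bar> + \<bar>Q\<bar>))" by (simp add: algebra_simps)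
  also have "\<dots> \<le> 2 * K * (2 * (P * P + Q * Q))"
  proof (rule mult_left_mono)
    have "0 \<le> (\<bar>P\<bar> - \<bar>Q\<bar>) * (\<bar>P\<bar> - \<bar>Q\<bar>)" by simp
    then show "(\<bar>P\<bar> + \<bar>Q\<bar>) * (\<bar>P\<bar> + \<bar>Q\<bar>) \<le> 2 * (P * P + Q * Q)"
      by (simp add: algebra_simps abs_mult_self_eq)
  qed (use K in auto)
  finally show ?thesis by (simp add: algebra_simps)
qed

lemma cont_neg_nbhd:
  fixes f :: "real \<Rightarrow> real"
  assumes "isCont f z" "f z < 0"
  shows "\<exists>r>0. \<forall>s. \<bar>s - z\<bar> < r \<longrightarrow> f s < 0"
proof -
  have "f \<midarrow>z\<rightarrow> f z" using assms(1) by (simp add: isCont_def)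
  from LIM_fun_less_zero[OF this assms(2)] obtain r where "0 < r" "\<forall>x. x \<noteq> z \<and> \<bar>z - x\<bar> < r \<longrightarrow> f x < 0"
    by blast
  then show ?thesis using assms(2) by (intro exI[of _ r]) (auto simp: abs_minus_commute)
qed

lemma cont_pos_nbhd:
  fixes f :: "real \<Rightarrow> real"
  assumes "isCont f z" "f z > 0"
  shows "\<exists>r>0. \<forall>s. \<bar>s - z\<bar> < r \<longrightarrow> f s > 0"
  using cont_neg_nbhd[where f = "\<lambda>x. - f x" and z = z] assms by (auto intro: continuous_intros)

lemma first_integral:
  assumes ode: "wave_ode v p q P Q"
    and lpb: "(p \<longlongrightarrow> -1) at_bot" and lqb: "(q \<longlongrightarrow> -1) at_bot"
    and lpt: "(p \<longlongrightarrow> a) at_top" and lqt: "(q \<longlongrightarrow> b) at_top"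
  shows "\<And>x. P x + Q x = - v * (p x + q x + 2) - (q x - p x)^2 / 2"
    and "v * (a + b + 2) = - ((b - a)^2) / 2"
proof -
  note D = wave_ode_D[OF ode]
  define F where "F x = P x + Q x + v * (p x + q x) + (q x - p x) * (q x - p x) / 2" for x
  have dF: "(F has_real_derivative 0) (at x)" for x
  proof -
    have "(F has_real_derivative
       ((((q x - p x) / 2 - v) * P x - (q x - p x) * max ((Q x - P x) / 2) 0) +
        (- ((q x - p x) / 2 + v) * Q x - (q x - p x) * min ((Q x - P x) / 2) 0) +
        v * (P x + Q x) + ((Q x - P x) * (q x - p x) + (q x - p x) * (Q x - P x)) / 2)) (at x)"
      unfolding F_def by (auto intro!: derivative_eq_intros D)
    moreover have h: "max ((Q x - P x) / 2) 0 + min ((Q x - P x) / 2) 0 = (Q x - P x) / 2"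
      by (simp add: max_def min_def)
    have "(q x - p x) * max ((Q x - P x) / 2) 0 + (q x - p x) * min ((Q x - P x) / 2) 0 = (q x - p x) * ((Q x - P x) / 2)"
      using h by (metis distrib_left)
    then have "(((q x - p x) / 2 - v) * P x - (q x - p x) * max ((Q x - P x) / 2) 0) +
        (- ((q x - p x) / 2 + v) * Q x - (q x - p x) * min ((Q x - P x) / 2) 0) +
        v * (P x + Q x) + ((Q x - P x) * (q x - p x) + (q x - p x) * (Q x - P x)) / 2 = 0"
      by (simp add: field_simps)
    ultimately show ?thesis by simp
  qed
  have Fc: "F x = F 0" for x using DERIV_isconst_all[of F] dF by blast
  have eq: "P x + Q x = F 0 - v * (p x + q x) - (q x - p x)^2 / 2" for x
    using Fc[of x] unfolding F_def by (simp add: power2_eq_square)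
  have dw: "((\<lambda>x. p x + q x) has_real_derivative P x + Q x) (at x)" for x
    by (auto intro!: derivative_eq_intros D)
  have "((\<lambda>x. P x + Q x) \<longlongrightarrow> F 0 - v * (-1 + -1) - (-1 - -1)^2 / 2) at_bot"
    unfolding eq by (intro tendsto_intros lpb lqb) auto
  from deriv_limit_zero_bot[OF tendsto_add[OF lpb lqb] dw this] have F0: "F 0 = - 2 * v"
    by simp
  show e: "P x + Q x = - v * (p x + q x + 2) - (q x - p x)^2 / 2" for x
    using eq[of x] F0 by (simp add: algebra_simps)
  have "((\<lambda>x. P x + Q x) \<longlongrightarrow> - v * (a + b + 2) - (b - a)^2 / 2) at_top"
    unfolding e by (intro tendsto_intros lpt lqt) auto
  from deriv_limit_zero_top[OF tendsto_add[OF lpt lqt] dw this] show "v * (a + b + 2) = - ((b - a)^2) / 2"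
    by simp
qed

lemma speed_zero:
  assumes ode: "wave_ode 0 p q P Q"
    and lpb: "(p \<longlongrightarrow> -1) at_bot" and lqb: "(q \<longlongrightarrow> -1) at_bot"
    and lpt: "(p \<longlongrightarrow> a) at_top" and lqt: "(q \<longlongrightarrow> b) at_top"
  shows "a + b + 2 \<le> 0"
proof -
  note D = wave_ode_D[OF ode]
  have e: "P x + Q x = - ((q x - p x)^2) / 2" for x
    using first_integral(1)[OF ode lpb lqb lpt lqt, of x] by simp
  have dw: "((\<lambda>x. p x + q x) has_real_derivative P x + Q x) (at x)" for x
    by (auto intro!: derivative_eq_intros D)
  have mono: "p y + q y \<le> p x + q x" if "x \<le> y" for x y
    using DERIV_nonpos_imp_nonincreasing[OF that, of "\<lambda>x. p x + q x"] dw e by force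
  have "a + b \<le> p 0 + q 0"
    by (rule tendsto_upperbound[OF tendsto_add[OF lpt lqt]])
       (auto simp: eventually_at_top_linorder intro!: exI[of _ 0] mono)
  moreover have "p 0 + q 0 \<le> -1 + -1"
    by (rule tendsto_lowerbound[OF tendsto_add[OF lpb lqb]])
       (auto simp: eventually_at_bot_linorder intro!: exI[of _ 0] mono)
  ultimately show ?thesis by simp
qed

locale core =
  fixes v :: real and p q P Q :: "real \<Rightarrow> real" and a b :: real
  assumes ode: "wave_ode v p q P Q" and vneg: "v < 0"
    and lpb: "(p \<longlongrightarrow> -1) at_bot" and lqb: "(q \<longlongrightarrow> -1) at_bot"
    and lpt: "(p \<longlongrightarrow> a) at_top" and lqt: "(q \<longlongrightarrow> b) at_top" and ba: "b < a"
begin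

lemma dp: "(p has_real_derivative P x) (at x)" using wave_ode_D[OF ode] by blast
lemma dq: "(q has_real_derivative Q x) (at x)" using wave_ode_D[OF ode] by blast
lemma dP: "(P has_real_derivative (((q x - p x) / 2 - v) * P x - (q x - p x) * max ((Q x - P x) / 2) 0)) (at x)"
  using wave_ode_D[OF ode] by blast
lemma dQ: "(Q has_real_derivative (- ((q x - p x) / 2 + v) * Q x - (q x - p x) * min ((Q x - P x) / 2) 0)) (at x)"
  using wave_ode_D[OF ode] by blast

lemma cp: "isCont p x" by (rule DERIV_isCont[OF dp])
lemma cq: "isCont q x" by (rule DERIV_isCont[OF dq])
lemma cP: "isCont P x" by (rule DERIV_isCont[OF dP])
lemma cQ: "isCont Q x" by (rule DERIV_isCont[OF dQ])

lemma con: "continuous_on S p" "continuous_on S q" "continuous_on S P" "continuous_on S Q"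
  using cp cq cP cQ by (auto intro!: continuous_at_imp_continuous_on)

lemma uniq:
  assumes "P c = 0" "Q c = 0"
  shows "P x = 0 \<and> Q x = 0"
proof -
  define lo where "lo = min c x"
  define hi where "hi = max c x"
  have lh: "lo \<le> hi" unfolding lo_def hi_def by simp
  have "continuous_on {lo..hi} (\<lambda>x. q x - p x)" using con by (intro continuous_intros)
  then obtain M where M: "\<And>y. y \<in> {lo..hi} \<Longrightarrow> \<bar>q y - p y\<bar> \<le> M" using bounded_on_Icc by blast
  have M0: "0 \<le> M" using M[of lo] lh by force
  define h where "h y = P y * P y + Q y * Q y" for y
  have "h x = 0"
  proof (rule gronwall_zero[OF lh, where h = h and c = c and
        h' = "\<lambda>y. 2 * P y * (((q y - p y) / 2 - v) * P y - (q y - p y) * max ((Q y - P y) / 2) 0)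
             + 2 * Q y * (- ((q y - p y) / 2 + v) * Q y - (q y - p y) * min ((Q y - P y) / 2) 0)"
        and L = "4 * (M + \<bar>v\<bar>)"])
    fix y assume y: "y \<in> {lo..hi}"
    show "(h has_real_derivative 2 * P y * (((q y - p y) / 2 - v) * P y - (q y - p y) * max ((Q y - P y) / 2) 0)
             + 2 * Q y * (- ((q y - p y) / 2 + v) * Q y - (q y - p y) * min ((Q y - P y) / 2) 0)) (at y)"
      unfolding h_def by (auto intro!: derivative_eq_intros dP dQ)
    show "\<bar>2 * P y * (((q y - p y) / 2 - v) * P y - (q y - p y) * max ((Q y - P y) / 2) 0)
             + 2 * Q y * (- ((q y - p y) / 2 + v) * Q y - (q y - p y) * min ((Q y - P y) / 2) 0)\<bar>
          \<le> 4 * (M + \<bar>v\<bar>) * h y"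
      unfolding h_def using bound_sq[OF bound_auxP[OF M[OF y]] bound_auxQ[OF M[OF y]]] M0
      by (simp add: mult.assoc)
    show "0 \<le> h y" unfolding h_def by simp
  qed (use assms lo_def hi_def h_def in auto)
  then show ?thesis unfolding h_def
    by (metis add_nonneg_eq_0_iff mult_eq_0_iff zero_le_square)
qed

lemma nontriv:
  assumes "P c = 0" "Q c = 0"
  shows False
proof -
  have z: "P x = 0" "Q x = 0" for x using uniq[OF assms] by auto
  have pc: "p x = p 0" for x using DERIV_isconst_all[of p] dp z by metis
  then have pe: "p = (\<lambda>_::real. p 0)" by auto
  have "((\<lambda>_::real. p 0) \<longlongrightarrow> a) at_top" by (rule Lim_transform_eventually[OF lpt always_eventually]) (use pc in blast)
  have "((\<lambda>_::real. p 0) \<longlongrightarrow> -1) at_bot" by (rule Lim_transform_eventually[OF lpb always_eventually]) (use pc in blast)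
  then have "a = p 0" "-1 = p 0" using \<open>((\<lambda>_::real. p 0) \<longlongrightarrow> a) at_top\<close> by (simp_all add: tendsto_const_iff)
  moreover have qc: "q x = q 0" for x using DERIV_isconst_all[of q] dq z by metis
  then have qe: "q = (\<lambda>_::real. q 0)" by auto
  have "((\<lambda>_::real. q 0) \<longlongrightarrow> b) at_top" by (rule Lim_transform_eventually[OF lqt always_eventually]) (use qc in blast)
  have "((\<lambda>_::real. q 0) \<longlongrightarrow> -1) at_bot" by (rule Lim_transform_eventually[OF lqb always_eventually]) (use qc in blast)
  then have "b = q 0" "-1 = q 0" using \<open>((\<lambda>_::real. q 0) \<longlongrightarrow> b) at_top\<close> by (simp_all add: tendsto_const_iff)
  ultimately show False using ba by simp
qed


lemma A_hom:
  assumes "Q x - P x \<le> 0"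
  shows "((\<lambda>x. (3 * Q x - P x)) has_real_derivative (- (v + (q x - p x))) * ((3 * Q x - P x))) (at x)"
proof -
  have d: "((\<lambda>x. (3 * Q x - P x)) has_real_derivative
     (3 * (- ((q x - p x) / 2 + v) * Q x - (q x - p x) * min ((Q x - P x) / 2) 0)
      - (((q x - p x) / 2 - v) * P x - (q x - p x) * max ((Q x - P x) / 2) 0))) (at x)"
    by (rule DERIV_diff[OF DERIV_cmult[OF dQ] dP])
  have mx: "max ((Q x - P x) / 2) 0 = 0" "min ((Q x - P x) / 2) 0 = (Q x - P x) / 2" using assms by auto
  have "(3 * (- ((q x - p x) / 2 + v) * Q x - (q x - p x) * min ((Q x - P x) / 2) 0)
      - (((q x - p x) / 2 - v) * P x - (q x - p x) * max ((Q x - P x) / 2) 0))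
      = (- (v + (q x - p x))) * ((3 * Q x - P x))"
    unfolding mx by (simp add: field_simps)
  then show ?thesis by (rule DERIV_cong[OF d])
qed

lemma A_gen:
  assumes "Q x - P x \<ge> 0"
  shows "((\<lambda>x. (3 * Q x - P x)) has_real_derivative - v * (3 * Q x - P x) - (q x - p x) * (P x + Q x)) (at x)"
proof -
  have d: "((\<lambda>x. (3 * Q x - P x)) has_real_derivative
     (3 * (- ((q x - p x) / 2 + v) * Q x - (q x - p x) * min ((Q x - P x) / 2) 0)
      - (((q x - p x) / 2 - v) * P x - (q x - p x) * max ((Q x - P x) / 2) 0))) (at x)"
    by (rule DERIV_diff[OF DERIV_cmult[OF dQ] dP])
  have mx: "max ((Q x - P x) / 2) 0 = (Q x - P x) / 2" "min ((Q x - P x) / 2) 0 = 0" using assms by auto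
  have "(3 * (- ((q x - p x) / 2 + v) * Q x - (q x - p x) * min ((Q x - P x) / 2) 0)
      - (((q x - p x) / 2 - v) * P x - (q x - p x) * max ((Q x - P x) / 2) 0))
      = - v * (3 * Q x - P x) - (q x - p x) * (P x + Q x)"
    unfolding mx by (simp add: field_simps)
  then show ?thesis by (rule DERIV_cong[OF d])
qed

lemma B_hom:
  assumes "Q x - P x \<ge> 0"
  shows "((\<lambda>x. (3 * P x - Q x)) has_real_derivative ((q x - p x) - v) * ((3 * P x - Q x))) (at x)"
proof -
  have d: "((\<lambda>x. (3 * P x - Q x)) has_real_derivative
     (3 * (((q x - p x) / 2 - v) * P x - (q x - p x) * max ((Q x - P x) / 2) 0)
      - (- ((q x - p x) / 2 + v) * Q x - (q x - p x) * min ((Q x - P x) / 2) 0))) (at x)"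
    by (rule DERIV_diff[OF DERIV_cmult[OF dP] dQ])
  have mx: "max ((Q x - P x) / 2) 0 = (Q x - P x) / 2" "min ((Q x - P x) / 2) 0 = 0" using assms by auto
  have "(3 * (((q x - p x) / 2 - v) * P x - (q x - p x) * max ((Q x - P x) / 2) 0)
      - (- ((q x - p x) / 2 + v) * Q x - (q x - p x) * min ((Q x - P x) / 2) 0))
      = ((q x - p x) - v) * ((3 * P x - Q x))"
    unfolding mx by (simp add: field_simps)
  then show ?thesis by (rule DERIV_cong[OF d])
qed

lemma P_hom:
  assumes "Q x - P x \<le> 0"
  shows "(P has_real_derivative ((q x - p x) / 2 - v) * P x) (at x)"
proof -
  have mx: "max ((Q x - P x) / 2) 0 = 0" using assms by auto
  show ?thesis using dP[of x] unfolding mx by simp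
qed

lemma Q_hom:
  assumes "Q x - P x \<ge> 0"
  shows "(Q has_real_derivative (- ((q x - p x) / 2 + v)) * Q x) (at x)"
proof -
  have mx: "min ((Q x - P x) / 2) 0 = 0" using assms by auto
  show ?thesis using dQ[of x] unfolding mx by simp
qed

lemma Q_gen:
  assumes "Q x - P x \<le> 0"
  shows "(Q has_real_derivative (- ((q x - p x) / 2 + v)) * Q x - (q x - p x) * ((Q x - P x) / 2)) (at x)"
proof -
  have mx: "min ((Q x - P x) / 2) 0 = (Q x - P x) / 2" using assms by auto
  show ?thesis using dQ[of x] unfolding mx by simp
qed

lemma ce: "isCont (\<lambda>s. Q s - P s) z" using cP cQ by (intro continuous_intros)

lemma ck: "continuous_on S (\<lambda>x. k1 * (q x - p x) + k2)"
  using con by (intro continuous_intros)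

lemma inv_AB:
  assumes c: "(3 * Q c - P c) > 0" "(3 * P c - Q c) > 0" and x: "c \<le> x"
  shows "(3 * Q x - P x) > 0 \<and> (3 * P x - Q x) > 0"
proof (rule ccontr)
  assume nx: "\<not> ((3 * Q x - P x) > 0 \<and> (3 * P x - Q x) > 0)"
  define m where "m s = min ((3 * Q s - P s)) ((3 * P s - Q s))" for s
  have mc: "continuous_on UNIV m" unfolding m_def using con by (intro continuous_intros) auto
  have "m c > 0" "m x \<le> 0" using c nx unfolding m_def by (auto simp: min_def)
  then obtain z where z: "c < z" "z \<le> x" "m z = 0" "\<And>s. c \<le> s \<Longrightarrow> s < z \<Longrightarrow> m s > 0"
    using first_exit[OF mc _ x] by blast
  consider "(3 * Q z - P z) = 0" "(3 * P z - Q z) = 0"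
    | "(3 * Q z - P z) = 0" "(3 * P z - Q z) > 0"
    | "(3 * Q z - P z) > 0" "(3 * P z - Q z) = 0"
  proof -
    have Az: "(3 * Q z - P z) \<ge> 0" "(3 * P z - Q z) \<ge> 0"
      "(3 * Q z - P z) = 0 \<or> (3 * P z - Q z) = 0"
      using z(3) unfolding m_def by (auto simp: min_def split: if_splits)
    assume r: "(3 * Q z - P z) = 0 \<Longrightarrow> (3 * P z - Q z) = 0 \<Longrightarrow> thesis"
      "(3 * Q z - P z) = 0 \<Longrightarrow> (3 * P z - Q z) > 0 \<Longrightarrow> thesis"
      "(3 * Q z - P z) > 0 \<Longrightarrow> (3 * P z - Q z) = 0 \<Longrightarrow> thesis"
    show thesis
    proof (cases "(3 * Q z - P z) = 0")
      case True
      then show ?thesis using r(1,2) Az by (cases "(3 * P z - Q z) = 0") auto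
    next
      case False
      then show ?thesis using r(3) Az by auto
    qed
  qed
  then show False
  proof cases
    case 1
    have "P z = 0" using 1 by linarith
    moreover have "Q z = 0" using 1 by linarith
    ultimately show False by (rule nontriv)
  next
    case 2
    have ez: "Q z - P z < 0" using 2 by linarith
    obtain r where r: "r > 0" "\<And>s. \<bar>s - z\<bar> < r \<Longrightarrow> Q s - P s < 0"
      using cont_neg_nbhd[OF ce ez] by blast
    define a0 where "a0 = max c (z - r / 2)"
    have a0: "c \<le> a0" "a0 < z" using r z unfolding a0_def by auto
    have "(\<lambda>x. (3 * Q x - P x)) a0 = 0"
    proof (rule homog_zero[where X = "\<lambda>x. 3 * Q x - P x" and k = "\<lambda>x. (- 1) * (q x - p x) + (- v)" and a = a0 and b = z and c = z])
      show "a0 \<le> z" using a0 by simp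
      fix y assume y: "y \<in> {a0..z}"
      then have "\<bar>y - z\<bar> < r" using r unfolding a0_def by auto
      then have "Q y - P y \<le> 0" using r(2) by fastforce
      from A_hom[OF this] show "((\<lambda>x. (3 * Q x - P x)) has_real_derivative
          ((- 1) * (q y - p y) + (- v)) * ((3 * Q y - P y))) (at y)" by (simp add: algebra_simps)
    next
      show "continuous_on {a0..z} (\<lambda>x. (- 1) * (q x - p x) + (- v))" by (rule ck)
    qed (use a0 2 in auto)
    moreover have "m a0 > 0" using z(4) a0 by auto
    ultimately show False unfolding m_def by auto
  next
    case 3
    have ez: "Q z - P z > 0" using 3 by linarith
    obtain r where r: "r > 0" "\<And>s. \<bar>s - z\<bar> < r \<Longrightarrow> Q s - P s > 0"
      using cont_pos_nbhd[OF ce ez] by blast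
    define a0 where "a0 = max c (z - r / 2)"
    have a0: "c \<le> a0" "a0 < z" using r z unfolding a0_def by auto
    have "(\<lambda>x. (3 * P x - Q x)) a0 = 0"
    proof (rule homog_zero[where X = "\<lambda>x. 3 * P x - Q x" and k = "\<lambda>x. 1 * (q x - p x) + (- v)" and a = a0 and b = z and c = z])
      show "a0 \<le> z" using a0 by simp
      fix y assume y: "y \<in> {a0..z}"
      then have "\<bar>y - z\<bar> < r" using r unfolding a0_def by auto
      then have "Q y - P y \<ge> 0" using r(2) by fastforce
      from B_hom[OF this] show "((\<lambda>x. (3 * P x - Q x)) has_real_derivative
          (1 * (q y - p y) + (- v)) * ((3 * P y - Q y))) (at y)" by (simp add: algebra_simps)
    next
      show "continuous_on {a0..z} (\<lambda>x. 1 * (q x - p x) + (- v))" by (rule ck)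
    qed (use a0 3 in auto)
    moreover have "m a0 > 0" using z(4) a0 by auto
    ultimately show False unfolding m_def by auto
  qed
qed

end

context core begin

lemma inv_PQ:
  assumes c: "P c < 0" "Q c < 0" and x: "c \<le> x"
  shows "P x < 0 \<and> Q x < 0"
proof (rule ccontr)
  assume nx: "\<not> (P x < 0 \<and> Q x < 0)"
  define m where "m s = min (- P s) (- Q s)" for s
  have mc: "continuous_on UNIV m" unfolding m_def using con by (intro continuous_intros)
  have "m c > 0" "m x \<le> 0" using c nx unfolding m_def by (auto simp: min_def)
  then obtain z where z: "c < z" "z \<le> x" "m z = 0" "\<And>s. c \<le> s \<Longrightarrow> s < z \<Longrightarrow> m s > 0"
    using first_exit[OF mc _ x] by blast
  have Az: "P z \<le> 0" "Q z \<le> 0" "P z = 0 \<or> Q z = 0"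
    using z(3) unfolding m_def by (auto simp: min_def split: if_splits)
  consider "P z = 0" "Q z = 0" | "P z = 0" "Q z < 0" | "P z < 0" "Q z = 0"
    using Az by linarith
  then show False
  proof cases
    case 1
    then show False by (rule nontriv)
  next
    case 2
    have ez: "Q z - P z < 0" using 2 by linarith
    obtain r where r: "r > 0" "\<And>s. \<bar>s - z\<bar> < r \<Longrightarrow> Q s - P s < 0"
      using cont_neg_nbhd[OF ce ez] by blast
    define a0 where "a0 = max c (z - r / 2)"
    have a0: "c \<le> a0" "a0 < z" using r z unfolding a0_def by auto
    have "P a0 = 0"
    proof (rule homog_zero[where X = P and k = "\<lambda>x. (1 / 2) * (q x - p x) + (- v)" and a = a0 and b = z and c = z])
      show "a0 \<le> z" using a0 by simp
      fix y assume y: "y \<in> {a0..z}"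
      then have "\<bar>y - z\<bar> < r" using r unfolding a0_def by auto
      then have "Q y - P y \<le> 0" using r(2) by fastforce
      from P_hom[OF this] show "(P has_real_derivative ((1 / 2) * (q y - p y) + (- v)) * P y) (at y)"
        by (simp add: algebra_simps)
    next
      show "continuous_on {a0..z} (\<lambda>x. (1 / 2) * (q x - p x) + (- v))" by (rule ck)
    qed (use a0 2 in auto)
    moreover have "m a0 > 0" using z(4) a0 by auto
    ultimately show False unfolding m_def by auto
  next
    case 3
    have ez: "Q z - P z > 0" using 3 by linarith
    obtain r where r: "r > 0" "\<And>s. \<bar>s - z\<bar> < r \<Longrightarrow> Q s - P s > 0"
      using cont_pos_nbhd[OF ce ez] by blast
    define a0 where "a0 = max c (z - r / 2)"
    have a0: "c \<le> a0" "a0 < z" using r z unfolding a0_def by auto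
    have "Q a0 = 0"
    proof (rule homog_zero[where X = Q and k = "\<lambda>x. (- 1 / 2) * (q x - p x) + (- v)" and a = a0 and b = z and c = z])
      show "a0 \<le> z" using a0 by simp
      fix y assume y: "y \<in> {a0..z}"
      then have "\<bar>y - z\<bar> < r" using r unfolding a0_def by auto
      then have "Q y - P y \<ge> 0" using r(2) by fastforce
      from Q_hom[OF this] show "(Q has_real_derivative ((- 1 / 2) * (q y - p y) + (- v)) * Q y) (at y)"
        by (simp add: algebra_simps)
    next
      show "continuous_on {a0..z} (\<lambda>x. (- 1 / 2) * (q x - p x) + (- v))" by (rule ck)
    qed (use a0 3 in auto)
    moreover have "m a0 > 0" using z(4) a0 by auto
    ultimately show False unfolding m_def by auto
  qed
qed

lemma eventually_dneg: "\<exists>R. \<forall>x\<ge>R. q x - p x < (b - a) / 2"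
proof -
  have "((\<lambda>x. q x - p x) \<longlongrightarrow> b - a) at_top" by (intro tendsto_intros lqt lpt)
  then have "eventually (\<lambda>x. q x - p x < (b - a) / 2) at_top"
    by (rule order_tendstoD) (use ba in auto)
  then show ?thesis by (auto simp: eventually_at_top_linorder)
qed

lemma dZ: "((\<lambda>x. 3 * q x - p x + 2) has_real_derivative 3 * Q x - P x) (at x)"
  by (auto intro!: derivative_eq_intros dp dq)

lemma lZ: "((\<lambda>x. 3 * q x - p x + 2) \<longlongrightarrow> 3 * b - a + 2) at_top"
  by (intro tendsto_intros lqt lpt)

lemma no_AB:
  assumes "\<And>x. x \<ge> c \<Longrightarrow> 3 * Q x - P x > 0 \<and> 3 * P x - Q x > 0"
  shows False
proof -
  obtain R where R: "\<And>x. x \<ge> R \<Longrightarrow> q x - p x < (b - a) / 2" using eventually_dneg by blast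
  define R' where "R' = max c R"
  have pos: "3 * Q x - P x > 0" "3 * P x - Q x > 0" "q x - p x < 0" if "x \<ge> R'" for x
    using assms[of x] R[of x] that ba unfolding R'_def by auto
  have incr: "\<exists>y. ((\<lambda>x. 3 * Q x - P x) has_real_derivative y) (at x) \<and> y \<ge> 0" if "x \<ge> R'" for x
  proof (cases "Q x - P x \<le> 0")
    case True
    have "- (v + (q x - p x)) > 0" using pos[OF that] vneg by linarith
    then have "(- (v + (q x - p x))) * (3 * Q x - P x) \<ge> 0" using pos[OF that] by simp
    then show ?thesis using A_hom[OF True] by blast
  next
    case False
    have "- v * (3 * Q x - P x) > 0" using pos[OF that] vneg by (simp add: mult_neg_pos)
    moreover have "(q x - p x) * (P x + Q x) \<le> 0"
      using pos[OF that] by (intro mult_nonpos_nonneg) auto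
    ultimately have "- v * (3 * Q x - P x) - (q x - p x) * (P x + Q x) \<ge> 0" by linarith
    then show ?thesis using A_gen[of x] False by auto
  qed
  have ge: "3 * Q x - P x \<ge> 3 * Q R' - P R'" if "x \<ge> R'" for x
    by (rule DERIV_nonneg_imp_nondecreasing[OF that]) (use incr in auto)
  have "3 * Q R' - P R' > 0" using pos[of R'] by simp
  then show False
    using no_growth_top[OF lZ, of R' "\<lambda>x. 3 * Q x - P x" "3 * Q R' - P R'"] dZ ge by auto
qed

lemma no_PQ:
  assumes "\<And>x. x \<ge> c \<Longrightarrow> P x < 0 \<and> Q x < 0"
  shows False
proof -
  obtain R where R: "\<And>x. x \<ge> R \<Longrightarrow> q x - p x < (b - a) / 2" using eventually_dneg by blast
  define R' where "R' = max c R"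
  have neg: "P x < 0" "Q x < 0" "q x - p x < 0" if "x \<ge> R'" for x
    using assms[of x] R[of x] that ba unfolding R'_def by auto
  have decr: "\<exists>y. (Q has_real_derivative y) (at x) \<and> y \<le> 0" if "x \<ge> R'" for x
  proof (cases "Q x - P x \<le> 0")
    case True
    have "(q x - p x) * (Q x - P x / 2) > 0"
      using neg[OF that] True by (intro mult_neg_neg) auto
    moreover have "v * Q x > 0" using neg[OF that] vneg by (intro mult_neg_neg) auto
    moreover have "(- ((q x - p x) / 2 + v)) * Q x - (q x - p x) * ((Q x - P x) / 2)
       = - ((q x - p x) * (Q x - P x / 2)) - v * Q x" by (simp add: field_simps)
    ultimately have "(- ((q x - p x) / 2 + v)) * Q x - (q x - p x) * ((Q x - P x) / 2) \<le> 0" by linarith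
    then show ?thesis using Q_gen[OF True] by blast
  next
    case False
    have h1: "(q x - p x) / 2 < 0" using neg(3)[OF that] by simp
    have "- ((q x - p x) / 2 + v) > 0" using h1 vneg by linarith
    then have "(- ((q x - p x) / 2 + v)) * Q x \<le> 0" using neg[OF that]
      by (simp add: mult_pos_neg less_imp_le)
    then show ?thesis using Q_hom[of x] False by auto
  qed
  have le: "Q x \<le> Q R'" if "x \<ge> R'" for x
    by (rule DERIV_nonpos_imp_nonincreasing[OF that]) (use decr in auto)
  have "Q R' < 0" using neg[of R'] by simp
  then show False
    using no_decay_top[OF lqt, of R' Q "- Q R'"] dq le by auto
qed

lemma e_nz: "Q x - P x \<noteq> 0"
proof
  assume e: "Q x - P x = 0"
  consider "P x = 0" | "P x > 0" | "P x < 0" by linarith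
  then show False
  proof cases
    case 1 then show False using nontriv[of x] e by simp
  next
    case 2
    have "3 * Q x - P x > 0" using e 2 by linarith
    moreover have "3 * P x - Q x > 0" using e 2 by linarith
    ultimately show False using no_AB[of x] inv_AB[of x] by blast
  next
    case 3
    have "Q x < 0" using e 3 by linarith
    with 3 show False using no_PQ[of x] inv_PQ[of x] by blast
  qed
qed

end

lemma no_sign_change:
  fixes f :: "real \<Rightarrow> real"
  assumes cont: "continuous_on UNIV f" and nz: "\<And>x. f x \<noteq> 0" and pos: "f x0 > 0"
  shows "f y > 0"
proof (rule ccontr)
  assume "\<not> f y > 0"
  then have fy: "f y \<le> 0" by simp
  show False
  proof (cases "x0 \<le> y")
    case True
    obtain z where "f z = 0" using IVT2'[of f y 0 x0, OF fy _ True] pos continuous_on_subset[OF cont]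
      by fastforce
    then show False using nz by blast
  next
    case False
    obtain z where "f z = 0" using IVT'[of f y 0 x0, OF fy] pos False continuous_on_subset[OF cont]
      by fastforce
    then show False using nz by blast
  qed
qed

context core begin

lemma ld_bot: "((\<lambda>x. q x - p x) \<longlongrightarrow> 0) at_bot"
  using tendsto_diff[OF lqb lpb] by simp

lemma ld_top: "((\<lambda>x. q x - p x) \<longlongrightarrow> b - a) at_top"
  using tendsto_diff[OF lqt lpt] by simp

lemma dd: "((\<lambda>x. q x - p x) has_real_derivative Q x - P x) (at x)"
  by (auto intro!: derivative_eq_intros dp dq)

lemma ce': "continuous_on UNIV (\<lambda>x. Q x - P x)" using con by (intro continuous_intros) auto

lemma e_neg: "Q x - P x < 0"
proof (rule ccontr)
  assume "\<not> Q x - P x < 0"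
  then have "Q x - P x > 0" using e_nz[of x] by linarith
  then have pos: "Q y - P y > 0" for y using no_sign_change[OF ce' e_nz] by blast
  have mono: "q y - p y \<le> q z - p z" if "y \<le> z" for y z
    by (rule DERIV_nonneg_imp_nondecreasing[OF that]) (use dd pos less_imp_le in blast)
  have "0 \<le> q 0 - p 0"
    by (rule tendsto_upperbound[OF ld_bot]) (auto simp: eventually_at_bot_linorder intro!: exI[of _ 0] mono)
  moreover have "q 0 - p 0 \<le> b - a"
    by (rule tendsto_lowerbound[OF ld_top]) (auto simp: eventually_at_top_linorder intro!: exI[of _ 0] mono)
  ultimately show False using ba by linarith
qed

lemma d_nonpos: "q x - p x \<le> 0"
proof -
  have mono: "q z - p z \<le> q y - p y" if "y \<le> z" for y z
    by (rule DERIV_nonpos_imp_nonincreasing[OF that]) (use dd e_neg less_imp_le in blast)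
  show ?thesis
    by (rule tendsto_lowerbound[OF ld_bot]) (auto simp: eventually_at_bot_linorder intro!: exI[of _ x] mono)
qed

lemma A_hom': "((\<lambda>x. 3 * Q x - P x) has_real_derivative ((- 1) * (q x - p x) + (- v)) * (3 * Q x - P x)) (at x)"
  using A_hom[of x] e_neg[of x] by (simp add: algebra_simps)

lemma A_zero: "3 * Q x - P x = 0"
proof -
  have k: "(- 1) * (q x - p x) + (- v) > 0" for x
  proof -
    have "q x - p x + v < 0" using d_nonpos[of x] vneg by linarith
    then show ?thesis by (simp add: algebra_simps)
  qed
  have hz: "3 * Q y - P y = 0" if "3 * Q c - P c = 0" for c y
  proof (rule homog_zero[where X = "\<lambda>x. 3 * Q x - P x" and k = "\<lambda>x. (- 1) * (q x - p x) + (- v)"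
        and a = "min c y" and b = "max c y" and c = c])
    show "continuous_on {min c y..max c y} (\<lambda>x. (- 1) * (q x - p x) + (- v))" by (rule ck)
  qed (use A_hom' that in auto)
  have A0: "3 * Q 0 - P 0 = 0"
  proof (rule ccontr)
    assume nz0: "3 * Q 0 - P 0 \<noteq> 0"
    have nz: "3 * Q y - P y \<noteq> 0" for y using hz[of y 0] nz0 by auto
    have cA: "continuous_on UNIV (\<lambda>x. 3 * Q x - P x)" using con by (intro continuous_intros) auto
    consider "3 * Q 0 - P 0 > 0" | "3 * Q 0 - P 0 < 0" using nz0 by linarith
    then show False
    proof cases
      case 1
      have pos: "3 * Q y - P y > 0" for y using no_sign_change[OF cA nz 1] .
      have ge: "3 * Q y - P y \<ge> 3 * Q 0 - P 0" if "y \<ge> 0" for y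
      proof (rule DERIV_nonneg_imp_nondecreasing[OF that])
        fix t
        show "\<exists>z. ((\<lambda>x. 3 * Q x - P x) has_real_derivative z) (at t) \<and> z \<ge> 0"
          using A_hom'[of t] k[of t] pos[of t] by (intro exI conjI) (auto intro: less_imp_le)
      qed
      show False using no_growth_top[OF lZ, of 0 "\<lambda>x. 3 * Q x - P x" "3 * Q 0 - P 0"] dZ ge 1 by auto
    next
      case 2
      have cA': "continuous_on UNIV (\<lambda>x. - (3 * Q x - P x))" using con by (intro continuous_intros) auto
      have nz': "- (3 * Q y - P y) \<noteq> 0" for y using nz[of y] by simp
      have p0: "- (3 * Q 0 - P 0) > 0" using 2 by simp
      have neg: "- (3 * Q y - P y) > 0" for y using no_sign_change[OF cA' nz' p0] .
      have le: "3 * Q y - P y \<le> 3 * Q 0 - P 0" if "y \<ge> 0" for y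
      proof (rule DERIV_nonpos_imp_nonincreasing[OF that])
        fix t
        have "((- 1) * (q t - p t) + (- v)) * (3 * Q t - P t) \<le> 0"
          using k[of t] neg[of t] by (intro mult_nonneg_nonpos) auto
        then show "\<exists>z. ((\<lambda>x. 3 * Q x - P x) has_real_derivative z) (at t) \<and> z \<le> 0"
          using A_hom'[of t] by blast
      qed
      show False using no_decay_top[OF lZ, of 0 "\<lambda>x. 3 * Q x - P x" "- (3 * Q 0 - P 0)"] dZ le 2 by auto
    qed
  qed
  show ?thesis using hz[OF A0] .
qed

lemma Z_zero: "3 * q x - p x + 2 = 0"
proof -
  have c: "3 * q y - p y + 2 = 3 * q 0 - p 0 + 2" for y
    using DERIV_isconst_all[of "\<lambda>x. 3 * q x - p x + 2" y 0] dZ A_zero by auto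
  have lb: "((\<lambda>x. 3 * q x - p x + 2) \<longlongrightarrow> 3 * (-1) - (-1) + 2) at_bot" by (intro tendsto_intros lqb lpb)
  have "((\<lambda>_::real. 3 * q 0 - p 0 + 2) \<longlongrightarrow> 3 * (-1) - (-1) + 2) at_bot"
    by (rule Lim_transform_eventually[OF lb always_eventually]) (use c in blast)
  then have "3 * q 0 - p 0 + 2 = 0" by (simp add: tendsto_const_iff)
  then show ?thesis using c[of x] by simp
qed

lemma core_result: "a = -1 - 6 * v \<and> b = -1 - 2 * v"
proof -
  have "((\<lambda>_::real. 0) \<longlongrightarrow> 3 * b - a + 2) at_top"
    by (rule Lim_transform_eventually[OF lZ always_eventually]) (use Z_zero in auto)
  then have ab: "a = 3 * b + 2" by (simp add: tendsto_const_iff)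
  have fi: "v * (a + b + 2) = - ((b - a)^2) / 2" by (rule first_integral(2)[OF ode lpb lqb lpt lqt])
  have "(b + 1) * (4 * v + 2 * (b + 1)) = 0"
    using fi unfolding ab by (simp add: power2_eq_square algebra_simps)
  moreover have "b + 1 \<noteq> 0" using ab ba by auto
  ultimately have h: "4 * v + 2 * (b + 1) = 0" by simp
  then have h': "4 * v + 2 * b + 2 = 0" by (simp add: algebra_simps)
  then have "b = -1 - 2 * v" by linarith
  moreover then have "a = -1 - 6 * v" using ab by linarith
  ultimately show ?thesis by simp
qed

end

lemma core_wave:
  assumes ode: "wave_ode v p q P Q" and vneg: "v < 0"
    and lpb: "(p \<longlongrightarrow> -1) at_bot" and lqb: "(q \<longlongrightarrow> -1) at_bot"
    and lpt: "(p \<longlongrightarrow> a) at_top" and lqt: "(q \<longlongrightarrow> b) at_top" and ab: "a \<noteq> b"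
  shows "(b < a \<and> a = -1 - 6 * v \<and> b = -1 - 2 * v \<and> (\<forall>x. 3 * q x - p x + 2 = 0)) \<or>
         (a < b \<and> a = -1 - 2 * v \<and> b = -1 - 6 * v \<and> (\<forall>x. 3 * p x - q x + 2 = 0))"
proof (cases "b < a")
  case True
  interpret core v p q P Q a b using assms True by unfold_locales auto
  show ?thesis using core_result Z_zero True by auto
next
  case False
  then have "a < b" using ab by auto
  interpret core v q p Q P b a using assms \<open>a < b\<close> wave_ode_swap[OF ode] by unfold_locales auto
  show ?thesis using core_result Z_zero \<open>a < b\<close> by auto
qed

lemma mirror_top_bot:
  fixes f :: "real \<Rightarrow> real"
  assumes "(f \<longlongrightarrow> l) at_top" shows "((\<lambda>x. f (- x)) \<longlongrightarrow> l) at_bot"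
  using assms by (simp add: at_top_mirror filterlim_filtermap o_def)

lemma mirror_bot_top:
  fixes f :: "real \<Rightarrow> real"
  assumes "(f \<longlongrightarrow> l) at_bot" shows "((\<lambda>x. f (- x)) \<longlongrightarrow> l) at_top"
  using assms by (simp add: at_bot_mirror filterlim_filtermap o_def)

lemma tw_extract:
  assumes "tfe_traveling_wave g v gm gp"
  shows "\<exists>P Q. wave_ode v (\<lambda>x. fst (g x)) (\<lambda>x. snd (g x)) P Q"
    "((\<lambda>x. fst (g x)) \<longlongrightarrow> fst gm) at_bot" "((\<lambda>x. snd (g x)) \<longlongrightarrow> snd gm) at_bot"
    "((\<lambda>x. fst (g x)) \<longlongrightarrow> fst gp) at_top" "((\<lambda>x. snd (g x)) \<longlongrightarrow> snd gp) at_top"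
proof -
  show "\<exists>P Q. wave_ode v (\<lambda>x. fst (g x)) (\<lambda>x. snd (g x)) P Q" by (rule tw_to_ode[OF assms])
  have l: "(g \<longlongrightarrow> gm) at_bot" "(g \<longlongrightarrow> gp) at_top" using assms unfolding tfe_traveling_wave_def by auto
  show "((\<lambda>x. fst (g x)) \<longlongrightarrow> fst gm) at_bot" "((\<lambda>x. snd (g x)) \<longlongrightarrow> snd gm) at_bot"
    "((\<lambda>x. fst (g x)) \<longlongrightarrow> fst gp) at_top" "((\<lambda>x. snd (g x)) \<longlongrightarrow> snd gp) at_top"
    using l by (auto intro: tendsto_fst tendsto_snd)
qed

lemma terrace_arith:
  fixes a b v1 v2 :: real
  assumes FI1: "v1 * (a + b + 2) = - ((b - a)^2) / 2" and FI2: "v2 * (2 - a - b) = (b - a)^2 / 2"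
    and Z1: "v1 = 0 \<Longrightarrow> a + b + 2 \<le> 0" and Z2: "v2 = 0 \<Longrightarrow> 2 - a - b \<le> 0"
    and C1: "v1 < 0 \<Longrightarrow> a \<noteq> b \<Longrightarrow> (a = -1 - 6 * v1 \<and> b = -1 - 2 * v1) \<or> (a = -1 - 2 * v1 \<and> b = -1 - 6 * v1)"
    and C2: "v2 > 0 \<Longrightarrow> a \<noteq> b \<Longrightarrow> (a = 1 - 6 * v2 \<and> b = 1 - 2 * v2) \<or> (a = 1 - 2 * v2 \<and> b = 1 - 6 * v2)"
    and le: "v1 \<le> v2"
  shows "((a = 1/2 \<and> b = -1/2) \<or> (a = -1/2 \<and> b = 1/2)) \<and> v1 = -1/4 \<and> v2 = 1/4"
proof (cases "a = b")
  case True
  have f1: "v1 * (2 * a + 2) = 0" using FI1 True by (simp add: algebra_simps)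
  have f2: "v2 * (2 - 2 * a) = 0" using FI2 True by (simp add: algebra_simps)
  show ?thesis
  proof (cases "v1 = 0")
    case True
    then have "a \<le> -1" using Z1 \<open>a = b\<close> by simp
    then have "v2 = 0" using f2 by simp
    then have "a \<ge> 1" using Z2 \<open>a = b\<close> by simp
    then show ?thesis using \<open>a \<le> -1\<close> by simp
  next
    case False
    then have "a = -1" using f1 by simp
    then have "v2 = 0" using f2 by simp
    then show ?thesis using Z2 \<open>a = b\<close> \<open>a = -1\<close> by simp
  qed
next
  case False
  have sq: "(b - a)^2 > 0" using False by simp
  have "v1 \<noteq> 0" using FI1 sq by auto
  have "v2 \<noteq> 0" using FI2 sq by auto
  consider "v1 < 0" "v2 > 0" | "v1 < 0" "v2 < 0" | "v1 > 0" "v2 > 0"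
    using \<open>v1 \<noteq> 0\<close> \<open>v2 \<noteq> 0\<close> le by linarith
  then show ?thesis
  proof cases
    case 1
    from C1[OF 1(1) False] C2[OF 1(2) False] show ?thesis by auto
  next
    case 2
    have s1: "a + b = -2 - 8 * v1" using C1[OF 2(1) False] by auto
    have "b - a = 4 * v1 \<or> b - a = - 4 * v1" using C1[OF 2(1) False] by auto
    then have s2: "(b - a)^2 = 16 * v1^2" by (auto simp: power2_eq_square)
    note s = s1 s2
    have e: "v2 * (4 + 8 * v1) = 8 * v1^2" using FI2 s by (simp add: algebra_simps)
    have "v1^2 > 0" using 2 by simp
    have neg: "4 + 8 * v1 < 0"
    proof (rule ccontr)
      assume "\<not> 4 + 8 * v1 < 0"
      then have "v2 * (4 + 8 * v1) \<le> 0" using 2 by (intro mult_nonpos_nonneg) auto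
      then show False using e \<open>v1^2 > 0\<close> by simp
    qed
    have "(v2 - v1) * (4 + 8 * v1) \<le> 0" using le neg by (intro mult_nonneg_nonpos) auto
    then have "v2 * (4 + 8 * v1) - v1 * (4 + 8 * v1) \<le> 0" by (simp add: algebra_simps)
    then have "8 * v1^2 - 4 * v1 - 8 * v1^2 \<le> 0" unfolding e by (simp add: power2_eq_square algebra_simps)
    then show ?thesis using 2 by simp
  next
    case 3
    have s1: "a + b = 2 - 8 * v2" using C2[OF 3(2) False] by auto
    have "b - a = 4 * v2 \<or> b - a = - 4 * v2" using C2[OF 3(2) False] by auto
    then have s2: "(b - a)^2 = 16 * v2^2" by (auto simp: power2_eq_square)
    note s = s1 s2
    have e: "v1 * (4 - 8 * v2) = - 8 * v2^2" using FI1 s by (simp add: algebra_simps)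
    have "v2^2 > 0" using 3 by simp
    have neg: "4 - 8 * v2 < 0"
    proof (rule ccontr)
      assume "\<not> 4 - 8 * v2 < 0"
      then have "v1 * (4 - 8 * v2) \<ge> 0" using 3 by simp
      then show False using e \<open>v2^2 > 0\<close> by simp
    qed
    have "(v2 - v1) * (4 - 8 * v2) \<le> 0" using le neg by (intro mult_nonneg_nonpos) auto
    then have "v2 * (4 - 8 * v2) - v1 * (4 - 8 * v2) \<le> 0" by (simp add: algebra_simps)
    then have "v2 * (4 - 8 * v2) + 8 * v2^2 \<le> 0" unfolding e by simp
    then have "4 * v2 \<le> 0" by (simp add: power2_eq_square algebra_simps)
    then show ?thesis using 3 by simp
  qed
qed

lemma terrace_facts:
  assumes T: "tfe_terrace2 (-1, -1) \<sigma>1 (1, 1) g1 v1 g2 v2"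
  obtains P1 Q1 P2 Q2 where
    "wave_ode v1 (\<lambda>x. fst (g1 x)) (\<lambda>x. snd (g1 x)) P1 Q1"
    "((\<lambda>x. fst (g1 x)) \<longlongrightarrow> -1) at_bot" "((\<lambda>x. snd (g1 x)) \<longlongrightarrow> -1) at_bot"
    "((\<lambda>x. fst (g1 x)) \<longlongrightarrow> fst \<sigma>1) at_top" "((\<lambda>x. snd (g1 x)) \<longlongrightarrow> snd \<sigma>1) at_top"
    "wave_ode (- v2) (\<lambda>x. - fst (g2 (- x))) (\<lambda>x. - snd (g2 (- x))) P2 Q2"
    "((\<lambda>x. - fst (g2 (- x))) \<longlongrightarrow> -1) at_bot" "((\<lambda>x. - snd (g2 (- x))) \<longlongrightarrow> -1) at_bot"
    "((\<lambda>x. - fst (g2 (- x))) \<longlongrightarrow> - fst \<sigma>1) at_top" "((\<lambda>x. - snd (g2 (- x))) \<longlongrightarrow> - snd \<sigma>1) at_top"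
    "v1 \<le> v2"
proof -
  have tw1: "tfe_traveling_wave g1 v1 (-1, -1) \<sigma>1" and tw2: "tfe_traveling_wave g2 v2 \<sigma>1 (1, 1)"
    and le: "v1 \<le> v2" using T unfolding tfe_terrace2_def by auto
  note e1 = tw_extract[OF tw1] and e2 = tw_extract[OF tw2]
  obtain P1 Q1 where o1: "wave_ode v1 (\<lambda>x. fst (g1 x)) (\<lambda>x. snd (g1 x)) P1 Q1" using e1(1) by blast
  obtain P2 Q2 where o2: "wave_ode v2 (\<lambda>x. fst (g2 x)) (\<lambda>x. snd (g2 x)) P2 Q2" using e2(1) by blast
  have o2r: "wave_ode (- v2) (\<lambda>x. - fst (g2 (- x))) (\<lambda>x. - snd (g2 (- x))) (\<lambda>x. P2 (- x)) (\<lambda>x. Q2 (- x))"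
    using wave_ode_reflect[OF o2] by simp
  have l1: "((\<lambda>x. - fst (g2 (- x))) \<longlongrightarrow> - 1) at_bot"
    using tendsto_minus[OF mirror_top_bot[OF e2(4)]] by simp
  have l2: "((\<lambda>x. - snd (g2 (- x))) \<longlongrightarrow> - 1) at_bot"
    using tendsto_minus[OF mirror_top_bot[OF e2(5)]] by simp
  have l3: "((\<lambda>x. - fst (g2 (- x))) \<longlongrightarrow> - fst \<sigma>1) at_top"
    using tendsto_minus[OF mirror_bot_top[OF e2(2)]] by simp
  have l4: "((\<lambda>x. - snd (g2 (- x))) \<longlongrightarrow> - snd \<sigma>1) at_top"
    using tendsto_minus[OF mirror_bot_top[OF e2(3)]] by simp
  show ?thesis
    using that[OF o1 _ _ e1(4) e1(5) o2r l1 l2 l3 l4 le] e1(2,3) by simp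
qed

lemma classify:
  assumes T: "tfe_terrace2 (-1, -1) \<sigma>1 (1, 1) g1 v1 g2 v2"
  shows "\<sigma>1 \<in> {(1/2, -1/2), (-1/2, 1/2)} \<and> v1 = -1/4 \<and> v2 = 1/4"
proof -
  obtain P1 Q1 P2 Q2 where F:
    "wave_ode v1 (\<lambda>x. fst (g1 x)) (\<lambda>x. snd (g1 x)) P1 Q1"
    "((\<lambda>x. fst (g1 x)) \<longlongrightarrow> -1) at_bot" "((\<lambda>x. snd (g1 x)) \<longlongrightarrow> -1) at_bot"
    "((\<lambda>x. fst (g1 x)) \<longlongrightarrow> fst \<sigma>1) at_top" "((\<lambda>x. snd (g1 x)) \<longlongrightarrow> snd \<sigma>1) at_top"
    "wave_ode (- v2) (\<lambda>x. - fst (g2 (- x))) (\<lambda>x. - snd (g2 (- x))) P2 Q2"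
    "((\<lambda>x. - fst (g2 (- x))) \<longlongrightarrow> -1) at_bot" "((\<lambda>x. - snd (g2 (- x))) \<longlongrightarrow> -1) at_bot"
    "((\<lambda>x. - fst (g2 (- x))) \<longlongrightarrow> - fst \<sigma>1) at_top" "((\<lambda>x. - snd (g2 (- x))) \<longlongrightarrow> - snd \<sigma>1) at_top"
    "v1 \<le> v2"
    using terrace_facts[OF T] by blast
  define a where "a = fst \<sigma>1"
  define b where "b = snd \<sigma>1"
  have s: "\<sigma>1 = (a, b)" unfolding a_def b_def by simp
  have FI1: "v1 * (a + b + 2) = - ((b - a)^2) / 2"
    using first_integral(2)[OF F(1-5)] unfolding a_def b_def .
  have FI2': "(- v2) * (- a + - b + 2) = - ((- b - - a)^2) / 2"
    using first_integral(2)[OF F(6-10)] unfolding a_def b_def .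
  have FI2: "v2 * (2 - a - b) = (b - a)^2 / 2"
  proof -
    have "(- b - - a)^2 = (b - a)^2" by (simp add: power2_eq_square algebra_simps)
    then show ?thesis using FI2' by (simp add: algebra_simps)
  qed
  have Z1: "a + b + 2 \<le> 0" if "v1 = 0"
    using speed_zero[OF _ F(2-5)] F(1) that unfolding a_def b_def by simp
  have Z2: "2 - a - b \<le> 0" if "v2 = 0"
  proof -
    have "wave_ode 0 (\<lambda>x. - fst (g2 (- x))) (\<lambda>x. - snd (g2 (- x))) P2 Q2" using F(6) that by simp
    from speed_zero[OF this F(7-10)] show ?thesis unfolding a_def b_def by simp
  qed
  have C1: "(a = -1 - 6 * v1 \<and> b = -1 - 2 * v1) \<or> (a = -1 - 2 * v1 \<and> b = -1 - 6 * v1)"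
    if "v1 < 0" "a \<noteq> b"
    using core_wave[OF F(1) that(1) F(2-5)] that(2) unfolding a_def b_def by auto
  have C2: "(a = 1 - 6 * v2 \<and> b = 1 - 2 * v2) \<or> (a = 1 - 2 * v2 \<and> b = 1 - 6 * v2)"
    if "v2 > 0" "a \<noteq> b"
  proof -
    have "- v2 < 0" "- a \<noteq> - b" using that by auto
    from core_wave[OF F(6) this(1) F(7-8), of "- a" "- b"] F(9-10) this(2)
    show ?thesis unfolding a_def b_def by auto
  qed
  have "((a = 1/2 \<and> b = -1/2) \<or> (a = -1/2 \<and> b = 1/2)) \<and> v1 = -1/4 \<and> v2 = 1/4"
    by (rule terrace_arith[OF FI1 FI2 Z1 Z2 C1 C2 F(11)])
  then show ?thesis unfolding s by auto
qed

lemma tendsto_const_eventually: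
  fixes f :: "real \<Rightarrow> real"
  assumes "(f \<longlongrightarrow> l) F" "F \<noteq> bot" "eventually (\<lambda>x. f x = c) F"
  shows "l = c"
proof -
  have "((\<lambda>_. c) \<longlongrightarrow> l) F" using Lim_transform_eventually[OF assms(1) assms(3)] .
  then show ?thesis using assms(2) tendsto_const_iff by metis
qed

lemma logistic_bounds:
  fixes w :: "real \<Rightarrow> real"
  assumes d: "\<And>x. (w has_real_derivative w x * (2 - w x) / 8) (at x)"
    and l0: "(w \<longlongrightarrow> 0) at_bot" and l2: "(w \<longlongrightarrow> 2) at_top"
  shows "0 < w x \<and> w x < 2"
proof -
  have cw: "continuous_on UNIV w" using d by (auto intro!: continuous_at_imp_continuous_on DERIV_isCont)
  have nz0: "w y \<noteq> 0" for y
  proof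
    assume w0: "w y = 0"
    have "w z = 0" if "z \<ge> y" for z
    proof (rule homog_zero[where X = w and k = "\<lambda>x. (2 - w x) / 8" and a = y and b = z and c = y])
      show "continuous_on {y..z} (\<lambda>x. (2 - w x) / 8)"
        using cw by (intro continuous_intros) (auto intro: continuous_on_subset)
      fix t show "(w has_real_derivative (2 - w t) / 8 * w t) (at t)" using d[of t] by (simp add: algebra_simps)
    qed (use that w0 in auto)
    then have "eventually (\<lambda>z. w z = 0) at_top" by (auto simp: eventually_at_top_linorder)
    then have "(2::real) = 0" by (rule tendsto_const_eventually[OF l2, rotated]) simp
    then show False by simp
  qed
  have nz2: "w y \<noteq> 2" for y
  proof
    assume w2: "w y = 2"
    have "(\<lambda>x. w x - 2) z = 0" if "z \<le> y" for z
    proof (rule homog_zero[where X = "\<lambda>x. w x - 2" and k = "\<lambda>x. - w x / 8" and a = z and b = y and c = y])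
      show "continuous_on {z..y} (\<lambda>x. - w x / 8)"
        using cw by (intro continuous_intros) (auto intro: continuous_on_subset)
      fix t show "((\<lambda>x. w x - 2) has_real_derivative - w t / 8 * (w t - 2)) (at t)"
        using d[of t] by (auto intro!: derivative_eq_intros simp: field_simps)
    qed (use that w2 in auto)
    then have "eventually (\<lambda>z. w z = 2) at_bot" by (auto simp: eventually_at_bot_linorder)
    then have "(0::real) = 2" by (rule tendsto_const_eventually[OF l0, rotated]) simp
    then show False by simp
  qed
  have "eventually (\<lambda>x. w x > 1) at_top" using l2 by (rule order_tendstoD) simp
  then obtain x1 where x1: "w x1 > 1" by (auto simp: eventually_at_top_linorder)
  have pos: "w x > 0" using no_sign_change[OF cw nz0, of x1 x] x1 by simp
  have "eventually (\<lambda>x. w x < 1) at_bot" using l0 by (rule order_tendstoD) simp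
  then obtain x0 where x0: "w x0 < 1" by (auto simp: eventually_at_bot_linorder)
  have cw2: "continuous_on UNIV (\<lambda>x. 2 - w x)" using cw by (intro continuous_intros)
  have "2 - w x > 0" using no_sign_change[OF cw2, of x0 x] nz2 x0 by force
  then show ?thesis using pos by simp
qed

lemma logistic_unique:
  fixes w1 w2 :: "real \<Rightarrow> real"
  assumes d1: "\<And>x. (w1 has_real_derivative w1 x * (2 - w1 x) / 8) (at x)"
    and l10: "(w1 \<longlongrightarrow> 0) at_bot" and l12: "(w1 \<longlongrightarrow> 2) at_top"
    and d2: "\<And>x. (w2 has_real_derivative w2 x * (2 - w2 x) / 8) (at x)"
    and l20: "(w2 \<longlongrightarrow> 0) at_bot" and l22: "(w2 \<longlongrightarrow> 2) at_top"
  shows "\<exists>c. \<forall>x. w2 x = w1 (x + c)"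
proof -
  define G where "G t = 2 * exp t / (1 + exp t)" for t :: real
  have phi: "\<exists>k. \<forall>x. w x = G (x / 4 + k)"
    if d: "\<And>x. (w has_real_derivative w x * (2 - w x) / 8) (at x)"
      and l0: "(w \<longlongrightarrow> 0) at_bot" and l2: "(w \<longlongrightarrow> 2) at_top" for w :: "real \<Rightarrow> real"
  proof -
    have b: "0 < w x" "w x < 2" for x using logistic_bounds[OF d l0 l2] by auto
    define \<phi> where "\<phi> x = ln (w x) - ln (2 - w x) - x / 4" for x
    have dphi: "(\<phi> has_real_derivative 0) (at x)" for x
    proof -
      have n: "w x \<noteq> 0" "2 - w x \<noteq> 0" using b[of x] by auto
      have l1: "((\<lambda>x. ln (w x)) has_real_derivative (1 / w x) * (w x * (2 - w x) / 8)) (at x)"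
        by (rule DERIV_chain2[OF DERIV_ln_divide d]) (use b in auto)
      have d2w: "((\<lambda>x. 2 - w x) has_real_derivative - (w x * (2 - w x) / 8)) (at x)"
        using DERIV_diff[OF DERIV_const d] by simp
      have l2: "((\<lambda>x. ln (2 - w x)) has_real_derivative (1 / (2 - w x)) * (- (w x * (2 - w x) / 8))) (at x)"
        by (rule DERIV_chain2[OF DERIV_ln_divide d2w]) (use b in auto)
      have d4: "((\<lambda>x. x / 4) has_real_derivative 1 / 4) (at x)" by (auto intro!: derivative_eq_intros)
      have D: "(\<phi> has_real_derivative (1 / w x) * (w x * (2 - w x) / 8) - (1 / (2 - w x)) * (- (w x * (2 - w x) / 8)) - 1 / 4) (at x)"
        unfolding \<phi>_def by (rule DERIV_diff[OF DERIV_diff[OF l1 l2] d4])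
      have e1: "(1 / w x) * (w x * (2 - w x) / 8) = (2 - w x) / 8" using n by simp
      have e2: "(1 / (2 - w x)) * (- (w x * (2 - w x) / 8)) = - (w x / 8)" using n by simp
      have "(1 / w x) * (w x * (2 - w x) / 8) - (1 / (2 - w x)) * (- (w x * (2 - w x) / 8)) - 1 / 4 = 0"
        unfolding e1 e2 by (simp add: field_simps)
      then show ?thesis by (rule DERIV_cong[OF D])
    qed
    have c: "\<phi> x = \<phi> 0" for x using DERIV_isconst_all[of \<phi>] dphi by blast
    have "w x = G (x / 4 + \<phi> 0)" for x
    proof -
      have "ln (w x) - ln (2 - w x) = x / 4 + \<phi> 0" using c[of x] unfolding \<phi>_def by simp
      then have "exp (x / 4 + \<phi> 0) = exp (ln (w x) - ln (2 - w x))" by simp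
      also have "\<dots> = exp (ln (w x)) / exp (ln (2 - w x))" by (rule exp_diff)
      also have "\<dots> = w x / (2 - w x)" using b[of x] by simp
      finally have E: "exp (x / 4 + \<phi> 0) = w x / (2 - w x)" .
      define E where "E = exp (x / 4 + \<phi> 0)"
      have h: "E * (2 - w x) = w x" using E b[of x] unfolding E_def by simp
      have h2: "2 * E = w x * (1 + E)" using h by (simp add: algebra_simps)
      have "1 + E > 0" unfolding E_def by (simp add: add_pos_pos)
      then have "w x = 2 * E / (1 + E)" using h2 by (simp add: eq_divide_eq)
      then show ?thesis unfolding G_def E_def .
    qed
    then show ?thesis by blast
  qed
  obtain k1 where k1: "\<And>x. w1 x = G (x / 4 + k1)" using phi[OF d1 l10 l12] by blast
  obtain k2 where k2: "\<And>x. w2 x = G (x / 4 + k2)" using phi[OF d2 l20 l22] by blast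
  have "w2 x = w1 (x + 4 * (k2 - k1))" for x
  proof -
    have "(x + 4 * (k2 - k1)) / 4 + k1 = x / 4 + k2" by (simp add: field_simps)
    then show ?thesis unfolding k1 k2 by simp
  qed
  then show ?thesis by blast
qed

lemma wave_profile:
  assumes ode: "wave_ode (- 1 / 4) p q P Q"
    and lpb: "(p \<longlongrightarrow> -1) at_bot" and lqb: "(q \<longlongrightarrow> -1) at_bot"
    and lpt: "(p \<longlongrightarrow> a) at_top" and lqt: "(q \<longlongrightarrow> b) at_top"
    and ab: "(a, b) \<in> {(1/2, -1/2), (-1/2, 1/2)}"
  shows "(\<forall>x. ((\<lambda>x. p x + q x + 2) has_real_derivative (p x + q x + 2) * (2 - (p x + q x + 2)) / 8) (at x))
       \<and> ((\<lambda>x. p x + q x + 2) \<longlongrightarrow> 0) at_bot \<and> ((\<lambda>x. p x + q x + 2) \<longlongrightarrow> 2) at_top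
       \<and> (b < a \<longrightarrow> (\<forall>x. 3 * q x - p x + 2 = 0)) \<and> (a < b \<longrightarrow> (\<forall>x. 3 * p x - q x + 2 = 0))"
proof -
  note D = wave_ode_D[OF ode]
  have neq: "a \<noteq> b" and s: "a + b + 2 = 2" using ab by auto
  have fi: "P x + Q x = - (- 1 / 4) * (p x + q x + 2) - (q x - p x)^2 / 2" for x
    by (rule first_integral(1)[OF ode lpb lqb lpt lqt])
  have cw: "(b < a \<and> a = -1 - 6 * (- 1 / 4) \<and> b = -1 - 2 * (- 1 / 4) \<and> (\<forall>x. 3 * q x - p x + 2 = 0)) \<or>
         (a < b \<and> a = -1 - 2 * (- 1 / 4) \<and> b = -1 - 6 * (- 1 / 4) \<and> (\<forall>x. 3 * p x - q x + 2 = 0))"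
    by (rule core_wave[OF ode _ lpb lqb lpt lqt neq]) simp
  have sq: "(q x - p x)^2 = (p x + q x + 2)^2 / 4" for x
  proof -
    from cw have "q x - p x = - (p x + q x + 2) / 2 \<or> q x - p x = (p x + q x + 2) / 2"
    proof
      assume h: "b < a \<and> a = -1 - 6 * (- 1 / 4) \<and> b = -1 - 2 * (- 1 / 4) \<and> (\<forall>x. 3 * q x - p x + 2 = 0)"
      then have "3 * q x - p x + 2 = 0" by blast
      then have "q x - p x = - (p x + q x + 2) / 2" by (simp add: field_simps)
      then show ?thesis by blast
    next
      assume h: "a < b \<and> a = -1 - 2 * (- 1 / 4) \<and> b = -1 - 6 * (- 1 / 4) \<and> (\<forall>x. 3 * p x - q x + 2 = 0)"
      then have "3 * p x - q x + 2 = 0" by blast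
      then have "q x - p x = (p x + q x + 2) / 2" by (simp add: field_simps)
      then show ?thesis by blast
    qed
    then show ?thesis
    proof
      assume h: "q x - p x = - (p x + q x + 2) / 2"
      show ?thesis unfolding h by (simp add: power2_eq_square field_simps)
    next
      assume h: "q x - p x = (p x + q x + 2) / 2"
      show ?thesis unfolding h by (simp add: power2_eq_square field_simps)
    qed
  qed
  have dw: "((\<lambda>x. p x + q x + 2) has_real_derivative (p x + q x + 2) * (2 - (p x + q x + 2)) / 8) (at x)" for x
  proof -
    have "((\<lambda>x. p x + q x + 2) has_real_derivative P x + Q x) (at x)"
      by (auto intro!: derivative_eq_intros D)
    moreover have "P x + Q x = (p x + q x + 2) * (2 - (p x + q x + 2)) / 8"
      unfolding fi sq by (simp add: power2_eq_square field_simps)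
    ultimately show ?thesis by simp
  qed
  have l0: "((\<lambda>x. p x + q x + 2) \<longlongrightarrow> 0) at_bot"
    using tendsto_add[OF tendsto_add[OF lpb lqb] tendsto_const[of 2]] by simp
  have l2: "((\<lambda>x. p x + q x + 2) \<longlongrightarrow> 2) at_top"
    using tendsto_add[OF tendsto_add[OF lpt lqt] tendsto_const[of 2]] s by simp
  show ?thesis using dw l0 l2 cw by auto
qed

lemma profile_translate:
  fixes pg qg ph qh :: "real \<Rightarrow> real"
  assumes "\<And>x. 3 * qg x - pg x + 2 = 0" "\<And>x. 3 * qh x - ph x + 2 = 0"
    and "ph x + qh x + 2 = pg (x + c) + qg (x + c) + 2"
  shows "ph x = pg (x + c) \<and> qh x = qg (x + c)"
  using assms(1)[of "x + c"] assms(2)[of x] assms(3) by auto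

lemma profile_translate':
  fixes pg qg ph qh :: "real \<Rightarrow> real"
  assumes "\<And>x. 3 * pg x - qg x + 2 = 0" "\<And>x. 3 * ph x - qh x + 2 = 0"
    and "ph x + qh x + 2 = pg (x + c) + qg (x + c) + 2"
  shows "ph x = pg (x + c) \<and> qh x = qg (x + c)"
  using assms(1)[of "x + c"] assms(2)[of x] assms(3) by auto

lemma wave_translate:
  assumes og: "wave_ode (- 1 / 4) pg qg Pg Qg"
    and gb: "(pg \<longlongrightarrow> -1) at_bot" "(qg \<longlongrightarrow> -1) at_bot"
    and gt: "(pg \<longlongrightarrow> a) at_top" "(qg \<longlongrightarrow> b) at_top"
    and oh: "wave_ode (- 1 / 4) ph qh Ph Qh"
    and hb: "(ph \<longlongrightarrow> -1) at_bot" "(qh \<longlongrightarrow> -1) at_bot"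
    and ht: "(ph \<longlongrightarrow> a) at_top" "(qh \<longlongrightarrow> b) at_top"
    and ab: "(a, b) \<in> {(1/2, -1/2), (-1/2, 1/2)}"
  shows "\<exists>c. \<forall>x. ph x = pg (x + c) \<and> qh x = qg (x + c)"
proof -
  note G = wave_profile[OF og gb gt ab] and H = wave_profile[OF oh hb ht ab]
  obtain c where c: "\<And>x. ph x + qh x + 2 = pg (x + c) + qg (x + c) + 2"
    using logistic_unique[of "\<lambda>x. pg x + qg x + 2" "\<lambda>x. ph x + qh x + 2"] G H by blast
  have "ph x = pg (x + c) \<and> qh x = qg (x + c)" for x
  proof (cases "b < a")
    case True
    then show ?thesis using profile_translate[of qg pg qh ph x c] G H c by auto
  next
    case False
    then have "a < b" using ab by auto
    then show ?thesis using profile_translate'[of pg qg ph qh x c] G H c by auto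
  qed
  then show ?thesis by blast
qed

definition bW :: "real \<Rightarrow> real" where "bW x = 1 + tanh (x / 8)"
definition bD :: "real \<Rightarrow> real" where "bD x = bW x * (2 - bW x) / 8"

lemma bW_bounds: "0 < bW x" "bW x < 2"
  unfolding bW_def using tanh_real_bounds[of "x / 8"] by auto

lemma bD_nonneg: "0 \<le> bD x"
  unfolding bD_def using bW_bounds[of x] by simp

lemma d_bW: "(bW has_real_derivative bD x) (at x)"
proof -
  have D: "(bW has_real_derivative (1 - tanh (x / 8) ^ 2) * (1 / 8)) (at x)"
    unfolding bW_def by (auto intro!: derivative_eq_intros simp: cosh_real_pos[THEN less_imp_neq, symmetric])
  have "(1 - tanh (x / 8) ^ 2) * (1 / 8) = bD x"
    unfolding bD_def bW_def by (simp add: power2_eq_square field_simps)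
  then show ?thesis by (rule DERIV_cong[OF D])
qed

lemma d_bD: "(bD has_real_derivative bD x * (1 - bW x) / 4) (at x)"
proof -
  have D: "(bD has_real_derivative (bD x * (2 - bW x) + bW x * (- bD x)) / 8) (at x)"
    unfolding bD_def[abs_def] by (auto intro!: derivative_eq_intros d_bW[unfolded bD_def] simp: bD_def)
  have "(bD x * (2 - bW x) + bW x * (- bD x)) / 8 = bD x * (1 - bW x) / 4"
    by (simp add: field_simps)
  then show ?thesis by (rule DERIV_cong[OF D])
qed

lemma base_ode:
  "wave_ode (- 1 / 4) (\<lambda>x. 3 * bW x / 4 - 1) (\<lambda>x. bW x / 4 - 1) (\<lambda>x. 3 * bD x / 4) (\<lambda>x. bD x / 4)"
  unfolding wave_ode_def
proof (intro allI conjI)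
  fix x :: real
  have ex: "tfe_exchange ((bD x / 4 - 3 * bD x / 4) / 2) (3 * bW x / 4 - 1) (bW x / 4 - 1)
      = (bD x / 4) * (3 * bW x / 4 - 1)"
    using bD_nonneg[of x] unfolding tfe_exchange_def by auto
  show "((\<lambda>x. 3 * bW x / 4 - 1) has_real_derivative 3 * bD x / 4) (at x)"
    by (auto intro!: derivative_eq_intros d_bW)
  show "((\<lambda>x. bW x / 4 - 1) has_real_derivative bD x / 4) (at x)"
    by (auto intro!: derivative_eq_intros d_bW)
  have D1: "((\<lambda>x. 3 * bD x / 4) has_real_derivative 3 * (bD x * (1 - bW x) / 4) / 4) (at x)"
    by (auto intro!: derivative_eq_intros d_bD)
  have E1: "3 * (bD x * (1 - bW x) / 4) / 4 = - (- 1 / 4) * (3 * bD x / 4) + (bD x / 4 - 3 * bD x / 4) / 2 * (3 * bW x / 4 - 1) +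
      (bW x / 4 - 1 - (3 * bW x / 4 - 1)) / 2 * (3 * bD x / 4) +
      tfe_exchange ((bD x / 4 - 3 * bD x / 4) / 2) (3 * bW x / 4 - 1) (bW x / 4 - 1)"
    unfolding ex by (simp add: field_simps)
  show "((\<lambda>x. 3 * bD x / 4) has_real_derivative - (- 1 / 4) * (3 * bD x / 4) + (bD x / 4 - 3 * bD x / 4) / 2 * (3 * bW x / 4 - 1) +
      (bW x / 4 - 1 - (3 * bW x / 4 - 1)) / 2 * (3 * bD x / 4) +
      tfe_exchange ((bD x / 4 - 3 * bD x / 4) / 2) (3 * bW x / 4 - 1) (bW x / 4 - 1)) (at x)"
    by (rule DERIV_cong[OF D1 E1])
  have D2: "((\<lambda>x. bD x / 4) has_real_derivative (bD x * (1 - bW x) / 4) / 4) (at x)"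
    by (auto intro!: derivative_eq_intros d_bD)
  have E2: "(bD x * (1 - bW x) / 4) / 4 = - (- 1 / 4) * (bD x / 4) - (bD x / 4 - 3 * bD x / 4) / 2 * (bW x / 4 - 1) -
      (bW x / 4 - 1 - (3 * bW x / 4 - 1)) / 2 * (bD x / 4) -
      tfe_exchange ((bD x / 4 - 3 * bD x / 4) / 2) (3 * bW x / 4 - 1) (bW x / 4 - 1)"
    unfolding ex by (simp add: field_simps)
  show "((\<lambda>x. bD x / 4) has_real_derivative - (- 1 / 4) * (bD x / 4) - (bD x / 4 - 3 * bD x / 4) / 2 * (bW x / 4 - 1) -
      (bW x / 4 - 1 - (3 * bW x / 4 - 1)) / 2 * (bD x / 4) -
      tfe_exchange ((bD x / 4 - 3 * bD x / 4) / 2) (3 * bW x / 4 - 1) (bW x / 4 - 1)) (at x)"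
    by (rule DERIV_cong[OF D2 E2])
qed

lemma bW_top: "(bW \<longlongrightarrow> 2) at_top"
proof -
  have f: "filterlim (\<lambda>x::real. (1 / 8) * x) at_top at_top"
    by (rule filterlim_cmult_at_bot_at_top[OF filterlim_ident]) auto
  have "((\<lambda>x::real. tanh ((1 / 8) * x)) \<longlongrightarrow> 1) at_top"
    by (rule filterlim_compose[OF tanh_real_at_top f])
  then have "((\<lambda>x::real. 1 + tanh ((1 / 8) * x)) \<longlongrightarrow> 1 + 1) at_top" by (intro tendsto_intros)
  then show ?thesis unfolding bW_def[abs_def] by simp
qed

lemma bW_bot: "(bW \<longlongrightarrow> 0) at_bot"
proof -
  have f: "filterlim (\<lambda>x::real. (1 / 8) * x) at_bot at_bot"
  proof -
    have "filterlim (\<lambda>x::real. (1 / 8) * x) at_top at_top"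
      by (rule filterlim_cmult_at_bot_at_top[OF filterlim_ident]) auto
    then have "filterlim (\<lambda>x::real. (1 / 8) * (- x)) at_bot at_top"
      using filterlim_uminus_at_top by fastforce
    then show ?thesis
      using filterlim_compose[OF _ filterlim_uminus_at_top_at_bot, of "\<lambda>x. (1/8) * (- x)" at_bot] by simp
  qed
  have "((\<lambda>x::real. tanh ((1 / 8) * x)) \<longlongrightarrow> -1) at_bot"
    by (rule filterlim_compose[OF tanh_real_at_bot f])
  then have "((\<lambda>x::real. 1 + tanh ((1 / 8) * x)) \<longlongrightarrow> 1 + -1) at_bot" by (intro tendsto_intros)
  then show ?thesis unfolding bW_def[abs_def] by simp
qed

lemma stationary_all: "tfe_stationary s"
  unfolding tfe_stationary_def tfe_classical_solution_def
  by (rule exI[of _ "\<lambda>t y. 0"])+ (auto simp: tfe_exchange_def Let_def)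

lemma base_limits:
  "((\<lambda>x. 3 * bW x / 4 - 1) \<longlongrightarrow> -1) at_bot" "((\<lambda>x. bW x / 4 - 1) \<longlongrightarrow> -1) at_bot"
  "((\<lambda>x. 3 * bW x / 4 - 1) \<longlongrightarrow> 1/2) at_top" "((\<lambda>x. bW x / 4 - 1) \<longlongrightarrow> -1/2) at_top"
proof -
  show "((\<lambda>x. 3 * bW x / 4 - 1) \<longlongrightarrow> -1) at_bot"
    using tendsto_diff[OF tendsto_divide[OF tendsto_mult[OF tendsto_const bW_bot], of "\<lambda>_. 4" 4] tendsto_const, of 3 1] by simp
  show "((\<lambda>x. bW x / 4 - 1) \<longlongrightarrow> -1) at_bot"
    using tendsto_diff[OF tendsto_divide[OF bW_bot, of "\<lambda>_. 4" 4] tendsto_const, of 1] by simp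
  show "((\<lambda>x. 3 * bW x / 4 - 1) \<longlongrightarrow> 1/2) at_top"
    using tendsto_diff[OF tendsto_divide[OF tendsto_mult[OF tendsto_const bW_top], of "\<lambda>_. 4" 4] tendsto_const, of 3 1] by simp
  show "((\<lambda>x. bW x / 4 - 1) \<longlongrightarrow> -1/2) at_top"
    using tendsto_diff[OF tendsto_divide[OF bW_top, of "\<lambda>_. 4" 4] tendsto_const, of 1] by simp
qed

lemma existence:
  assumes "\<sigma>1 \<in> {(1/2, -1/2), (-1/2, 1/2)}"
  shows "\<exists>g1 g2. tfe_terrace2 (-1, -1) \<sigma>1 (1, 1) g1 (-1/4) g2 (1/4)"
proof -
  define p where "p x = 3 * bW x / 4 - 1" for x
  define q where "q x = bW x / 4 - 1" for x
  have o: "wave_ode (- 1 / 4) p q (\<lambda>x. 3 * bD x / 4) (\<lambda>x. bD x / 4)"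
    using base_ode unfolding p_def[abs_def] q_def[abs_def] .
  have lb: "(p \<longlongrightarrow> -1) at_bot" "(q \<longlongrightarrow> -1) at_bot" and lt: "(p \<longlongrightarrow> 1/2) at_top" "(q \<longlongrightarrow> -1/2) at_top"
    using base_limits unfolding p_def[abs_def] q_def[abs_def] by auto
  have o_s: "wave_ode (- 1 / 4) q p (\<lambda>x. bD x / 4) (\<lambda>x. 3 * bD x / 4)" by (rule wave_ode_swap[OF o])
  have o_r: "wave_ode (1 / 4) (\<lambda>x. - p (- x)) (\<lambda>x. - q (- x)) (\<lambda>x. 3 * bD (- x) / 4) (\<lambda>x. bD (- x) / 4)"
    using wave_ode_reflect[OF o] by simp
  have o_sr: "wave_ode (1 / 4) (\<lambda>x. - q (- x)) (\<lambda>x. - p (- x)) (\<lambda>x. bD (- x) / 4) (\<lambda>x. 3 * bD (- x) / 4)"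
    using wave_ode_reflect[OF o_s] by simp
  have rb: "((\<lambda>x. - p (- x)) \<longlongrightarrow> -1/2) at_bot" "((\<lambda>x. - q (- x)) \<longlongrightarrow> 1/2) at_bot"
    using tendsto_minus[OF mirror_top_bot[OF lt(1)]] tendsto_minus[OF mirror_top_bot[OF lt(2)]] by auto
  have rt: "((\<lambda>x. - p (- x)) \<longlongrightarrow> 1) at_top" "((\<lambda>x. - q (- x)) \<longlongrightarrow> 1) at_top"
    using tendsto_minus[OF mirror_bot_top[OF lb(1)]] tendsto_minus[OF mirror_bot_top[OF lb(2)]] by auto
  show ?thesis
  proof (cases "\<sigma>1 = (1/2, -1/2)")
    case True
    have w1: "tfe_traveling_wave (\<lambda>x. (p x, q x)) (- 1 / 4) (-1, -1) (1/2, -1/2)"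
      by (rule ode_to_tw[OF o]) (use lb lt in \<open>auto intro!: tendsto_Pair\<close>)
    have w2: "tfe_traveling_wave (\<lambda>x. (- q (- x), - p (- x))) (1 / 4) (1/2, -1/2) (1, 1)"
      by (rule ode_to_tw[OF o_sr]) (use rb rt in \<open>auto intro!: tendsto_Pair\<close>)
    have "tfe_terrace2 (-1, -1) \<sigma>1 (1, 1) (\<lambda>x. (p x, q x)) (-1/4) (\<lambda>x. (- q (- x), - p (- x))) (1/4)"
      unfolding tfe_terrace2_def True using w1 w2 stationary_all by simp
    then show ?thesis by blast
  next
    case False
    then have s: "\<sigma>1 = (-1/2, 1/2)" using assms by auto
    have w1: "tfe_traveling_wave (\<lambda>x. (q x, p x)) (- 1 / 4) (-1, -1) (-1/2, 1/2)"
      by (rule ode_to_tw[OF o_s]) (use lb lt in \<open>auto intro!: tendsto_Pair\<close>)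
    have w2: "tfe_traveling_wave (\<lambda>x. (- p (- x), - q (- x))) (1 / 4) (-1/2, 1/2) (1, 1)"
      by (rule ode_to_tw[OF o_r]) (use rb rt in \<open>auto intro!: tendsto_Pair\<close>)
    have "tfe_terrace2 (-1, -1) \<sigma>1 (1, 1) (\<lambda>x. (q x, p x)) (-1/4) (\<lambda>x. (- p (- x), - q (- x))) (1/4)"
      unfolding tfe_terrace2_def s using w1 w2 stationary_all by simp
    then show ?thesis by blast
  qed
qed

lemma uniqueness:
  assumes Tg: "tfe_terrace2 (-1, -1) \<sigma>1 (1, 1) g1 v1 g2 v2"
    and Th: "tfe_terrace2 (-1, -1) \<sigma>1 (1, 1) h1 w1 h2 w2"
  shows "\<exists>a b. \<forall>\<xi>. h1 \<xi> = g1 (\<xi> + a) \<and> h2 \<xi> = g2 (\<xi> + b)"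
proof -
  have cg: "\<sigma>1 \<in> {(1/2, -1/2), (-1/2, 1/2)}" "v1 = -1/4" "v2 = 1/4" using classify[OF Tg] by auto
  have ch: "w1 = -1/4" "w2 = 1/4" using classify[OF Th] by auto
  have S: "(fst \<sigma>1, snd \<sigma>1) \<in> {(1/2, -1/2), (-1/2, 1/2)}" using cg by auto
  have S': "(- fst \<sigma>1, - snd \<sigma>1) \<in> {(1/2, -1/2), (-1/2, 1/2)}" using cg by auto
  obtain Pg1 Qg1 Pg2 Qg2 where G:
    "wave_ode v1 (\<lambda>x. fst (g1 x)) (\<lambda>x. snd (g1 x)) Pg1 Qg1"
    "((\<lambda>x. fst (g1 x)) \<longlongrightarrow> -1) at_bot" "((\<lambda>x. snd (g1 x)) \<longlongrightarrow> -1) at_bot"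
    "((\<lambda>x. fst (g1 x)) \<longlongrightarrow> fst \<sigma>1) at_top" "((\<lambda>x. snd (g1 x)) \<longlongrightarrow> snd \<sigma>1) at_top"
    "wave_ode (- v2) (\<lambda>x. - fst (g2 (- x))) (\<lambda>x. - snd (g2 (- x))) Pg2 Qg2"
    "((\<lambda>x. - fst (g2 (- x))) \<longlongrightarrow> -1) at_bot" "((\<lambda>x. - snd (g2 (- x))) \<longlongrightarrow> -1) at_bot"
    "((\<lambda>x. - fst (g2 (- x))) \<longlongrightarrow> - fst \<sigma>1) at_top" "((\<lambda>x. - snd (g2 (- x))) \<longlongrightarrow> - snd \<sigma>1) at_top"
    by (rule terrace_facts[OF Tg])
  obtain Ph1 Qh1 Ph2 Qh2 where H:
    "wave_ode w1 (\<lambda>x. fst (h1 x)) (\<lambda>x. snd (h1 x)) Ph1 Qh1"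
    "((\<lambda>x. fst (h1 x)) \<longlongrightarrow> -1) at_bot" "((\<lambda>x. snd (h1 x)) \<longlongrightarrow> -1) at_bot"
    "((\<lambda>x. fst (h1 x)) \<longlongrightarrow> fst \<sigma>1) at_top" "((\<lambda>x. snd (h1 x)) \<longlongrightarrow> snd \<sigma>1) at_top"
    "wave_ode (- w2) (\<lambda>x. - fst (h2 (- x))) (\<lambda>x. - snd (h2 (- x))) Ph2 Qh2"
    "((\<lambda>x. - fst (h2 (- x))) \<longlongrightarrow> -1) at_bot" "((\<lambda>x. - snd (h2 (- x))) \<longlongrightarrow> -1) at_bot"
    "((\<lambda>x. - fst (h2 (- x))) \<longlongrightarrow> - fst \<sigma>1) at_top" "((\<lambda>x. - snd (h2 (- x))) \<longlongrightarrow> - snd \<sigma>1) at_top"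
    by (rule terrace_facts[OF Th])
  have og1: "wave_ode (- 1 / 4) (\<lambda>x. fst (g1 x)) (\<lambda>x. snd (g1 x)) Pg1 Qg1" using G(1) cg by simp
  have oh1: "wave_ode (- 1 / 4) (\<lambda>x. fst (h1 x)) (\<lambda>x. snd (h1 x)) Ph1 Qh1" using H(1) ch by simp
  have og2: "wave_ode (- 1 / 4) (\<lambda>x. - fst (g2 (- x))) (\<lambda>x. - snd (g2 (- x))) Pg2 Qg2" using G(6) cg by simp
  have oh2: "wave_ode (- 1 / 4) (\<lambda>x. - fst (h2 (- x))) (\<lambda>x. - snd (h2 (- x))) Ph2 Qh2" using H(6) ch by simp
  obtain a where a: "\<And>x. fst (h1 x) = fst (g1 (x + a)) \<and> snd (h1 x) = snd (g1 (x + a))"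
    using wave_translate[OF og1 G(2-5) oh1 H(2-5) S] by blast
  obtain c where c: "\<And>x. - fst (h2 (- x)) = - fst (g2 (- (x + c))) \<and> - snd (h2 (- x)) = - snd (g2 (- (x + c)))"
    using wave_translate[OF og2 G(7-10) oh2 H(7-10) S'] by blast
  have "h1 \<xi> = g1 (\<xi> + a) \<and> h2 \<xi> = g2 (\<xi> + (- c))" for \<xi>
  proof
    show "h1 \<xi> = g1 (\<xi> + a)" using a[of \<xi>] by (simp add: prod_eq_iff)
    have "- (- \<xi> + c) = \<xi> + (- c)" by simp
    then show "h2 \<xi> = g2 (\<xi> + (- c))" using c[of "- \<xi>"] by (simp add: prod_eq_iff)
  qed
  then show ?thesis by blast
qed

theorem theorem2:
  shows
    "(\<forall>\<sigma>1 \<in> {(1/2, -1/2), (-1/2, 1/2)}.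
        \<exists>g1 g2. tfe_terrace2 (-1, -1) \<sigma>1 (1, 1) g1 (-1/4) g2 (1/4)) \<and>
     (\<forall>\<sigma>1 g1 v1 g2 v2. tfe_terrace2 (-1, -1) \<sigma>1 (1, 1) g1 v1 g2 v2 \<longrightarrow>
        \<sigma>1 \<in> {(1/2, -1/2), (-1/2, 1/2)} \<and> v1 = -1/4 \<and> v2 = 1/4) \<and>
     (\<forall>\<sigma>1 g1 v1 g2 v2 h1 w1 h2 w2.
        tfe_terrace2 (-1, -1) \<sigma>1 (1, 1) g1 v1 g2 v2 \<and>
        tfe_terrace2 (-1, -1) \<sigma>1 (1, 1) h1 w1 h2 w2 \<longrightarrow>
        (\<exists>a b. \<forall>\<xi>. h1 \<xi> = g1 (\<xi> + a) \<and> h2 \<xi> = g2 (\<xi> + b)))"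
proof (intro conjI)
  show "\<forall>\<sigma>1 \<in> {(1/2, -1/2), (-1/2, 1/2)}. \<exists>g1 g2. tfe_terrace2 (-1, -1) \<sigma>1 (1, 1) g1 (-1/4) g2 (1/4)"
    using existence by blast
  show "\<forall>\<sigma>1 g1 v1 g2 v2. tfe_terrace2 (-1, -1) \<sigma>1 (1, 1) g1 v1 g2 v2 \<longrightarrow>
        \<sigma>1 \<in> {(1/2, -1/2), (-1/2, 1/2)} \<and> v1 = -1/4 \<and> v2 = 1/4"
    using classify by blast
  show "\<forall>\<sigma>1 g1 v1 g2 v2 h1 w1 h2 w2.
        tfe_terrace2 (-1, -1) \<sigma>1 (1, 1) g1 v1 g2 v2 \<and>
        tfe_terrace2 (-1, -1) \<sigma>1 (1, 1) h1 w1 h2 w2 \<longrightarrow>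
        (\<exists>a b. \<forall>\<xi>. h1 \<xi> = g1 (\<xi> + a) \<and> h2 \<xi> = g2 (\<xi> + b))"
  proof (intro allI impI)
    fix \<sigma>1 g1 v1 g2 v2 h1 w1 h2 w2
    assume "tfe_terrace2 (-1, -1) \<sigma>1 (1, 1) g1 v1 g2 v2 \<and> tfe_terrace2 (-1, -1) \<sigma>1 (1, 1) h1 w1 h2 w2"
    then show "\<exists>a b. \<forall>\<xi>. h1 \<xi> = g1 (\<xi> + a) \<and> h2 \<xi> = g2 (\<xi> + b)"
      using uniqueness by blast
  qed
qed

end
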